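(* Fix an integer $k\ge 1$. For integers $a<b$ with $b-a\le k$, and $c<d$ with $d-c\le k$, write $\bar a,\bar b,\bar c,\bar d$ for the residues of $a,b,c,d$ modulo $k+1$. For every $u\in W^0$ the following hold, where $u\,\mathbf{t}_{ab}\mathbf{t}_{cd}$ means $(u\,\mathbf{t}_{ab})\,\mathbf{t}_{cd}$ and all operators written are assumed to have index differences between $1$ and $k$: (A) If $\bar a,\bar b,\bar c,\bar d$ are pairwise distinct, then $u\,\mathbf{t}_{ab}\mathbf{t}_{cd}=u\,\mathbf{t}_{cd}\mathbf{t}_{ab}$. (B1) If $a<c<b<d$, or if $b=c$ and $d-a>k+1$, then $u\,\mathbf{t}_{ab}\mathbf{t}_{cd}=u\,\mathbf{t}_{cd}\mathbf{t}_{ab}=0$. (B2) If ($\bar a=\bar c$ and $b\le d$) or ($\bar b=\bar d$ and $c\le a$), then $u\,\mathbf{t}_{ab}\mathbf{t}_{cd}=0$. (C1) If $a<b<d$ and $d-a=k+1$, then $u\,\mathbf{t}_{ab}\mathbf{t}_{bd}=u\,\mathbf{t}_{ab}\mathbf{t}_{b-k-1,a}$. (D) If $a<b<c<d$, $\bar b=\bar c$, $\bar d=\bar a$ and $(b-a)+(d-c)=k+1$, then $u\,\mathbf{t}_{ab}\mathbf{t}_{cd}=u\,\mathbf{t}_{d-k-1,c}\mathbf{t}_{b-k-1,a}$. (E1) If $a<b<c<d$ with $c-a\le k$ and $d-b\le k$, then $u\,\mathbf{t}_{bc}\mathbf{t}_{cd}\mathbf{t}_{ac}=u\,\mathbf{t}_{bd}\mathbf{t}_{ab}\mathbf{t}_{bc}$.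 (E2) If $a<b<c<d$ with $c-a\le k$ and $d-b\le k$, then $u\,\mathbf{t}_{ac}\mathbf{t}_{cd}\mathbf{t}_{bc}=u\,\mathbf{t}_{bc}\mathbf{t}_{ab}\mathbf{t}_{bd}$. (F) If $a<b<c$ and $c-a<k+1$, then $u\,\mathbf{t}_{bc}\mathbf{t}_{ab}\mathbf{t}_{bc}=u\,\mathbf{t}_{ab}\mathbf{t}_{bc}\mathbf{t}_{ab}=0$.
   Context: Fix an integer $k\ge1$. The affine symmetric group $W$ is the group of bijections $u:\mathbb Z\to\mathbb Z$ with $u(i+k+1)=u(i)+k+1$ for all $i$ and $u(1)+\cdots+u(k+1)=\binom{k+2}{2}$; the product is composition, $(uw)(i)=u(w(i))$. It is generated by $s_0,\dots,s_k$, where $s_i$ swaps $i+m(k+1)$ and $i+1+m(k+1)$ for all $m\in\mathbb Z$ and fixes everything else; $\ell(u)$ is the Coxeter length (minimal number of generators in an expression for $u$). For integers $a<b$ with $b-a\le k$, $t_{a,b}\in W$ is the element swapping $a+m(k+1)$ and $b+m(k+1)$ for all $m$ (so $(ut_{a,b})(a)=u(b)$). The set $W^0$ of affine $0$-grassmannian permutations consists of those $u\in W$ in which the values $1,2,\dots,k+1$ appear from left to right, i.e. $u^{-1}(1)<u^{-1}(2)<\cdots<u^{-1}(k+1)$. The operator $\mathbf{t}_{ab}$ on $\mathbb ZW$ acts on the right by $u\,\mathbf{t}_{ab}=u\,t_{a,b}$ if $\ell(ut_{a,b})=\ell(u)+1$ and $u(a)\le 0<u(b)$, and $u\,\mathbf{t}_{ab}=0$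 otherwise, extended linearly (with $0\,\mathbf{t}_{cd}=0$). (It is a known fact that $\ell(ut_{a,b})=\ell(u)+1$ iff $u(a)<u(b)$ and every $a<i<b$ has $u(i)<u(a)$ or $u(i)>u(b)$.) *)

theory Defs
  imports Main
begin

definition affW :: "nat \<Rightarrow> (int \<Rightarrow> int) set" where
  "affW k = {u. bij u \<and> (\<forall>i. u (i + int k + 1) = u i + int k + 1)
              \<and> (\<Sum>i=1..int k + 1. u i) = int ((k + 2) choose 2)}"

(* t_{a,b}: swaps a+m(k+1) and b+m(k+1) for all m (meaningful for a<b, b-a<=k) *)
definition tr :: "nat \<Rightarrow> int \<Rightarrow> int \<Rightarrow> int \<Rightarrow> int" where
  "tr k a b i = (if i mod (int k + 1) = a mod (int k + 1) then i + (b - a)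
                 else if i mod (int k + 1) = b mod (int k + 1) then i - (b - a)
                 else i)"

definition sgen :: "nat \<Rightarrow> int \<Rightarrow> int \<Rightarrow> int" where
  "sgen k i = tr k i (i + 1)"

definition clen :: "nat \<Rightarrow> (int \<Rightarrow> int) \<Rightarrow> nat" where
  "clen k u = (LEAST n. \<exists>ws. length ws = n \<and> set ws \<subseteq> {0..int k}
                     \<and> u = foldr (\<circ>) (map (sgen k) ws) id)"

definition affW0 :: "nat \<Rightarrow> (int \<Rightarrow> int) set" where
  "affW0 k = {u \<in> affW k. \<forall>i j. 1 \<le> i \<longrightarrow> i < j \<longrightarrow> j \<le> int k + 1 \<longrightarrow> inv u i < inv u j}"

(* action of the operator t_ab on a basis element: None encodes 0 *)
definition tbas :: "nat \<Rightarrow> int \<Rightarrow> int \<Rightarrow> (int \<Rightarrow> int) \<Rightarrow> (int \<Rightarrow> int) option" where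
  "tbas k a b u = (if clen k (u \<circ> tr k a b) = clen k u + 1 \<and> u a \<le> 0 \<and> 0 < u b
                   then Some (u \<circ> tr k a b) else None)"

(* The group ring ZW: finitely supported integer-valued functions on permutations.
   (The ambient type is all functions; all elements we use are finitely supported.) *)
type_synonym zw = "(int \<Rightarrow> int) \<Rightarrow> int"

definition zw_zero :: zw where
  "zw_zero = (\<lambda>_. 0)"

definition basis :: "(int \<Rightarrow> int) \<Rightarrow> zw" where
  "basis u = (\<lambda>v. if v = u then 1 else 0)"

(* linear extension of the right action of the operator t_ab:  f t_ab *)
definition topr :: "nat \<Rightarrow> int \<Rightarrow> int \<Rightarrow> zw \<Rightarrow> zw" where
  "topr k a b f = (\<lambda>w. \<Sum>u\<in>{u. f u \<noteq> 0 \<and> tbas k a b u = Some w}. f u)"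

definition okp :: "nat \<Rightarrow> int \<Rightarrow> int \<Rightarrow> bool" where
  "okp k a b \<longleftrightarrow> a < b \<and> b - a \<le> int k"

end

theory Submission
  imports Defs
begin



abbreviation NN :: "nat \<Rightarrow> int" where "NN k \<equiv> int k + 1"

lemma mod_eq_close:
  fixes N x y :: int
  assumes "N > 0" "x mod N = y mod N" "\<bar>x - y\<bar> < N"
  shows "x = y"
proof -
  have "N dvd (x - y)" using assms(2) by (simp add: mod_eq_dvd_iff)
  then obtain m where m: "x - y = N * m" by (auto simp: dvd_def)
  show ?thesis
  proof (cases "m = 0")
    case True then show ?thesis using m by simp
  next
    case False
    then have "\<bar>m\<bar> \<ge> 1" by simp
    then have "\<bar>N * m\<bar> \<ge> N" using assms(1) by (simp add: abs_mult)
    then show ?thesis using m assms(3) by simp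
  qed
qed

lemma mod_eq_iff_ex: fixes N x y :: int
  shows "x mod N = y mod N \<longleftrightarrow> (\<exists>m. y = x + m * N)"
proof
  assume "x mod N = y mod N"
  then have "N dvd (y - x)" by (metis mod_eq_dvd_iff dvd_minus_iff minus_diff_eq)
  then obtain m where "y - x = N * m" by (auto simp: dvd_def)
  then show "\<exists>m. y = x + m * N" by (intro exI[of _ m]) (simp add: algebra_simps)
next
  assume "\<exists>m. y = x + m * N"
  then obtain m where "y = x + m * N" by blast
  then show "x mod N = y mod N" by simp
qed

lemma affW_per: "u \<in> affW k \<Longrightarrow> u (i + NN k) = u i + NN k"
  unfolding affW_def by (simp add: add.assoc)

lemma affW_perm: assumes "u \<in> affW k" shows "u (i + m * NN k) = u i + m * NN k"
proof (induction m rule: int_induct[of _ 0])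
  case base then show ?case by simp
next
  case (step1 m)
  have "u (i + (m + 1) * NN k) = u ((i + m * NN k) + NN k)" by (simp add: algebra_simps)
  also have "\<dots> = u (i + m * NN k) + NN k" using affW_per[OF assms] .
  finally show ?case using step1 by (simp add: algebra_simps)
next
  case (step2 m)
  have "u (i + m * NN k) = u ((i + (m - 1) * NN k) + NN k)" by (simp add: algebra_simps)
  also have "\<dots> = u (i + (m - 1) * NN k) + NN k" using affW_per[OF assms] .
  finally show ?case using step2 by (simp add: algebra_simps)
qed

lemma affW_inj: "u \<in> affW k \<Longrightarrow> inj u"
  unfolding affW_def bij_def by auto

lemma affW_class:
  assumes "u \<in> affW k"
  shows "u x mod NN k = u y mod NN k \<longleftrightarrow> x mod NN k = y mod NN k"
proof
  assume "x mod NN k = y mod NN k"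
  then obtain m where "y = x + m * NN k" using mod_eq_iff_ex by blast
  then show "u x mod NN k = u y mod NN k" using affW_perm[OF assms] by simp
next
  assume "u x mod NN k = u y mod NN k"
  then obtain m where "u y = u x + m * NN k" using mod_eq_iff_ex by blast
  then have "u y = u (x + m * NN k)" using affW_perm[OF assms] by simp
  then have "y = x + m * NN k" using affW_inj[OF assms] by (simp add: inj_eq)
  then show "x mod NN k = y mod NN k" by simp
qed

lemma okp_mod: assumes "okp k a b" shows "a mod NN k \<noteq> b mod NN k"
proof
  assume h: "a mod NN k = b mod NN k"
  have "\<bar>a - b\<bar> < NN k" using assms unfolding okp_def by linarith
  then have "a = b" using mod_eq_close[OF _ h] by simp
  then show False using assms unfolding okp_def by simp
qed

lemma tr_a: "okp k a b \<Longrightarrow> tr k a b a = b"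
  unfolding tr_def by simp
lemma tr_b: "okp k a b \<Longrightarrow> tr k a b b = a"
  using okp_mod[of k a b] by (simp add: tr_def)
lemma tr_A: "i mod NN k = a mod NN k \<Longrightarrow> tr k a b i = i + (b - a)"
  unfolding tr_def by simp
lemma tr_B: "okp k a b \<Longrightarrow> i mod NN k = b mod NN k \<Longrightarrow> tr k a b i = i - (b - a)"
  using okp_mod[of k a b] by (simp add: tr_def)
lemma tr_O: "i mod NN k \<noteq> a mod NN k \<Longrightarrow> i mod NN k \<noteq> b mod NN k \<Longrightarrow> tr k a b i = i"
  unfolding tr_def by simp

lemma tr_per: "tr k a b (i + NN k) = tr k a b i + NN k"
proof -
  have "(i + NN k) mod NN k = i mod NN k" by (rule mod_add_self2)
  then show ?thesis unfolding tr_def by (simp only:) simp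
qed

lemma tr_invol: assumes "okp k a b" shows "tr k a b (tr k a b i) = i"
proof -
  consider "i mod NN k = a mod NN k" | "i mod NN k = b mod NN k" | "i mod NN k \<noteq> a mod NN k \<and> i mod NN k \<noteq> b mod NN k" by blast
  then show ?thesis
  proof cases
    case 1
    have "(i + (b - a)) mod NN k = (a + (b - a)) mod NN k" using 1 by (rule mod_add_cong) simp
    then have "(i + (b - a)) mod NN k = b mod NN k" by simp
    then show ?thesis using 1 tr_A tr_B[OF assms] by simp
  next
    case 2
    have "(i - (b - a)) mod NN k = (b - (b - a)) mod NN k" using 2 by (rule mod_diff_cong) simp
    then have "(i - (b - a)) mod NN k = a mod NN k" by simp
    then show ?thesis using 2 tr_A tr_B[OF assms] by simp
  next
    case 3 then show ?thesis using tr_O by simp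
  qed
qed

lemma tr_bij: "okp k a b \<Longrightarrow> bij (tr k a b)"
  by (rule o_bij[of "tr k a b" "tr k a b"]) (auto simp: fun_eq_iff tr_invol)

lemma tr_window:
  assumes "okp k a b" "a \<le> i" "i < a + NN k"
  shows "tr k a b i = (if i = a then b else if i = b then a else i)"
proof -
  have ab: "a < b" "b - a \<le> int k" using assms(1) unfolding okp_def by auto
  have N: "NN k > 0" by simp
  show ?thesis
  proof (cases "i mod NN k = a mod NN k")
    case True
    have "\<bar>i - a\<bar> < NN k" using assms by linarith
    then have "i = a" using mod_eq_close[OF N True] by blast
    then show ?thesis using tr_a[OF assms(1)] by simp
  next
    case F1: False
    show ?thesis
    proof (cases "i mod NN k = b mod NN k")
      case True
      have "\<bar>i - b\<bar> < NN k" using assms ab by linarith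
      then have "i = b" using mod_eq_close[OF N True] by blast
      then show ?thesis using tr_b[OF assms(1)] ab by simp
    next
      case False
      then have "i \<noteq> a" "i \<noteq> b" using F1 by auto
      then show ?thesis using tr_O F1 False by simp
    qed
  qed
qed




definition Dsum :: "nat \<Rightarrow> (int\<Rightarrow>int) \<Rightarrow> int \<Rightarrow> int" where
  "Dsum k f m = (\<Sum>i\<in>{m..<m+NN k}. f i - i)"

lemma Dsum_step:
  assumes per: "\<And>i. f (i + NN k) = f i + NN k"
  shows "Dsum k f (m+1) = Dsum k f m"
proof -
  have s1: "{m..<m+NN k} = insert m {m+1..<m+NN k}" by auto
  have s2: "{m+1..<m+1+NN k} = insert (m+NN k) {m+1..<m+NN k}" by auto
  have "Dsum k f (m+1) = (f (m + NN k) - (m + NN k)) + (\<Sum>i\<in>{m+1..<m+NN k}. f i - i)"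
    unfolding Dsum_def s2 by (subst sum.insert) auto
  also have "\<dots> = (f m - m) + (\<Sum>i\<in>{m+1..<m+NN k}. f i - i)" using per[of m] by simp
  also have "\<dots> = Dsum k f m" unfolding Dsum_def s1 by (subst sum.insert) auto
  finally show ?thesis .
qed

lemma Dsum_const:
  assumes per: "\<And>i. f (i + NN k) = f i + NN k"
  shows "Dsum k f m = Dsum k f 1"
proof (induction m rule: int_induct[of _ 1])
  case base then show ?case by simp
next
  case (step1 i) then show ?case using Dsum_step[of f k i, OF per] by simp
next
  case (step2 i) then show ?case using Dsum_step[of f k "i - 1", OF per] by simp
qed

lemma sum_id_int: "(\<Sum>i\<in>{1..int k + 1}. i) = int ((k + 2) choose 2)"
proof (induction k)
  case 0 then show ?case by (simp add: numeral_2_eq_2)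
next
  case (Suc k)
  have s: "{1..int (Suc k) + 1} = insert (int k + 2) {1..int k + 1}" by auto
  have c: "Suc (Suc (Suc k)) choose 2 = Suc (Suc k) + (Suc (Suc k) choose 2)"
    by (simp add: numeral_2_eq_2)
  show ?case unfolding s using Suc c by (subst sum.insert) auto
qed

lemma affW_iff:
  assumes "bij u" "\<And>i. u (i + int k + 1) = u i + int k + 1"
  shows "u \<in> affW k \<longleftrightarrow> Dsum k u 1 = 0"
proof -
  have s: "{1..<1 + NN k} = {1..int k + 1}" by auto
  have "Dsum k u 1 = (\<Sum>i\<in>{1..int k + 1}. u i) - (\<Sum>i\<in>{1..int k + 1}. i)"
    unfolding Dsum_def s by (simp add: sum_subtractf)
  then show ?thesis using assms sum_id_int[of k] unfolding affW_def by auto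
qed

lemma affW_Dsum: assumes "u \<in> affW k" shows "Dsum k u m = 0"
proof -
  have per: "\<And>i. u (i + NN k) = u i + NN k" using affW_per[OF assms] .
  have "bij u" "\<And>i. u (i + int k + 1) = u i + int k + 1" using assms unfolding affW_def by auto
  then have "Dsum k u 1 = 0" using affW_iff assms by blast
  then show ?thesis using Dsum_const[of u k m, OF per] by simp
qed

lemma tr_bij_window:
  assumes "okp k a b"
  shows "bij_betw (tr k a b) {a..<a + NN k} {a..<a + NN k}"
proof -
  have ab: "a < b" "b < a + NN k" using assms unfolding okp_def by auto
  have img: "tr k a b i \<in> {a..<a + NN k}" if "i \<in> {a..<a + NN k}" for i
    using tr_window[OF assms, of i] that ab by auto
  show ?thesis
  proof (rule bij_betw_byWitness[where f'="tr k a b"])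
    show "\<forall>x\<in>{a..<a + NN k}. tr k a b (tr k a b x) = x" using tr_invol[OF assms] by simp
    show "\<forall>x\<in>{a..<a + NN k}. tr k a b (tr k a b x) = x" using tr_invol[OF assms] by simp
    show "tr k a b ` {a..<a + NN k} \<subseteq> {a..<a + NN k}" using img by auto
    show "tr k a b ` {a..<a + NN k} \<subseteq> {a..<a + NN k}" using img by auto
  qed
qed

lemma affW_tr:
  assumes u: "u \<in> affW k" and ab: "okp k a b"
  shows "u \<circ> tr k a b \<in> affW k"
proof -
  let ?t = "tr k a b" let ?I = "{a..<a + NN k}"
  have per: "\<And>i. (u \<circ> ?t) (i + NN k) = (u \<circ> ?t) i + NN k"
    using tr_per affW_per[OF u] by simp
  have bij: "bij (u \<circ> ?t)" using tr_bij[OF ab] u unfolding affW_def by (auto intro: bij_comp)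
  have bw: "bij_betw ?t ?I ?I" by (rule tr_bij_window[OF ab])
  have "Dsum k (u \<circ> ?t) a = (\<Sum>i\<in>?I. (u (?t i) - ?t i)) + (\<Sum>i\<in>?I. ?t i - i)"
    unfolding Dsum_def by (simp add: sum.distrib[symmetric])
  also have "(\<Sum>i\<in>?I. (u (?t i) - ?t i)) = (\<Sum>i\<in>?I. u i - i)"
    using sum.reindex_bij_betw[OF bw, of "\<lambda>i. u i - i"] by simp
  also have "(\<Sum>i\<in>?I. ?t i - i) = (\<Sum>i\<in>?I. ?t i) - (\<Sum>i\<in>?I. i)" by (simp add: sum_subtractf)
  also have "(\<Sum>i\<in>?I. ?t i) = (\<Sum>i\<in>?I. i)"
    using sum.reindex_bij_betw[OF bw, of "\<lambda>i. i"] by simp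
  finally have "Dsum k (u \<circ> ?t) a = Dsum k u a" unfolding Dsum_def by simp
  then have "Dsum k (u \<circ> ?t) 1 = 0" using Dsum_const[of "u \<circ> ?t" k a, OF per] affW_Dsum[OF u] by simp
  then show ?thesis using affW_iff[of "u \<circ> ?t" k] bij per by (simp add: add.assoc)
qed

lemma id_affW: "id \<in> affW k"
proof -
  have "Dsum k id 1 = 0" unfolding Dsum_def by simp
  then show ?thesis using affW_iff[of id k] by simp
qed




definition Fv :: "nat \<Rightarrow> (int\<Rightarrow>int) \<Rightarrow> int \<Rightarrow> int \<Rightarrow> int" where
  "Fv k u i j = \<bar>(u j - u i) div NN k\<bar>"
definition Pset :: "nat \<Rightarrow> int \<Rightarrow> (int\<times>int) set" where
  "Pset k m = {(i,j). m \<le> i \<and> i < j \<and> j < m + NN k}"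
definition Lw :: "nat \<Rightarrow> (int\<Rightarrow>int) \<Rightarrow> int \<Rightarrow> int" where
  "Lw k u m = (\<Sum>p\<in>Pset k m. Fv k u (fst p) (snd p))"

lemma Pset_finite: "finite (Pset k m)"
proof -
  have "Pset k m \<subseteq> {m..<m+NN k} \<times> {m..<m+NN k}" unfolding Pset_def by auto
  then show ?thesis by (rule finite_subset) auto
qed

lemma neg_div: fixes x N :: int assumes "N > 0" "x mod N \<noteq> 0"
  shows "(- x) div N = - (x div N) - 1"
  using zdiv_zminus1_eq_if[of N x] assms by simp

lemma diff_class:
  assumes u: "u \<in> affW k" and pq: "p mod NN k \<noteq> q mod NN k"
  shows "(u q - u p) mod NN k \<noteq> 0"
proof
  assume "(u q - u p) mod NN k = 0"
  then have "u p mod NN k = u q mod NN k" by (metis mod_eq_dvd_iff dvd_minus_iff minus_diff_eq mod_0_imp_dvd)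
  then show False using affW_class[OF u] pq by simp
qed

lemma H_val:
  assumes u: "u \<in> affW k" and pq: "p mod NN k \<noteq> q mod NN k"
  shows "Fv k u q p - Fv k u p q = (if u p < u q then 1 else -1)"
proof -
  define x where "x = u q - u p"
  have N: "NN k > 0" by simp
  have nd: "x mod NN k \<noteq> 0" using diff_class[OF u pq] x_def by simp
  have e: "u p - u q = - x" using x_def by simp
  have m: "(- x) div NN k = - (x div NN k) - 1" using neg_div[OF N nd] .
  have "x \<noteq> 0" using nd by auto
  show ?thesis
  proof (cases "u p < u q")
    case True
    then have "x > 0" using x_def by simp
    then have "x div NN k \<ge> 0" using N by (simp add: pos_imp_zdiv_nonneg_iff)
    then show ?thesis unfolding Fv_def e m using True x_def by simp
  next
    case False
    then have "x < 0" using x_def \<open>x \<noteq> 0\<close> by simp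
    then have "x div NN k < 0" using N by (simp add: pos_imp_zdiv_neg_iff)
    then show ?thesis unfolding Fv_def e m using False x_def by simp
  qed
qed

lemma Fv_shift:
  assumes u: "u \<in> affW k" and pq: "p mod NN k \<noteq> q mod NN k"
  shows "Fv k u q (p + NN k) = Fv k u p q"
proof -
  define x where "x = u q - u p"
  have N: "NN k > 0" by simp
  have nd: "x mod NN k \<noteq> 0" using diff_class[OF u pq] x_def by simp
  have "u (p + NN k) - u q = (- x) + NN k" using affW_per[OF u] x_def by simp
  moreover have "((- x) + NN k) div NN k = (- x) div NN k + 1" by (rule div_add_self2) simp
  ultimately have "(u (p + NN k) - u q) div NN k = (- x) div NN k + 1" by simp
  also have "\<dots> = - (x div NN k)" using neg_div[OF N nd] by simp
  finally show ?thesis unfolding Fv_def x_def by simp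
qed

lemma Lw_step:
  assumes u: "u \<in> affW k"
  shows "Lw k u (m + 1) = Lw k u m"
proof -
  let ?S = "{m<..<m + NN k}"
  let ?Q = "{(i,j). m < i \<and> i < j \<and> j < m + NN k}"
  let ?F = "\<lambda>p. Fv k u (fst p) (snd p)"
  have fQ: "finite ?Q" by (rule finite_subset[of _ "?S \<times> ?S"]) auto
  have P1: "Pset k m = (\<lambda>j. (m,j)) ` ?S \<union> ?Q" unfolding Pset_def by auto
  have P2: "Pset k (m+1) = ?Q \<union> (\<lambda>i. (i, m + NN k)) ` ?S" unfolding Pset_def by auto
  have d1: "(\<lambda>j. (m,j)) ` ?S \<inter> ?Q = {}" by auto
  have d2: "?Q \<inter> (\<lambda>i. (i, m + NN k)) ` ?S = {}" by auto
  have s1: "sum ?F ((\<lambda>j. (m,j)) ` ?S) = (\<Sum>j\<in>?S. Fv k u m j)"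
    by (subst sum.reindex) (auto simp: inj_on_def)
  have s2: "sum ?F ((\<lambda>i. (i, m + NN k)) ` ?S) = (\<Sum>i\<in>?S. Fv k u i (m + NN k))"
    by (subst sum.reindex) (auto simp: inj_on_def)
  have s3: "(\<Sum>i\<in>?S. Fv k u i (m + NN k)) = (\<Sum>i\<in>?S. Fv k u m i)"
  proof (rule sum.cong)
    fix i assume i: "i \<in> ?S"
    have "m mod NN k \<noteq> i mod NN k"
    proof
      assume h: "m mod NN k = i mod NN k"
      have "\<bar>m - i\<bar> < NN k" using i by auto
      then show False using mod_eq_close[OF _ h] i by auto
    qed
    then show "Fv k u i (m + NN k) = Fv k u m i" using Fv_shift[OF u] by simp
  qed simp
  have "Lw k u m = sum ?F ((\<lambda>j. (m,j)) ` ?S) + sum ?F ?Q"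
    unfolding Lw_def P1 by (rule sum.union_disjoint) (use fQ d1 in auto)
  moreover have "Lw k u (m+1) = sum ?F ?Q + sum ?F ((\<lambda>i. (i, m + NN k)) ` ?S)"
    unfolding Lw_def P2 by (rule sum.union_disjoint) (use fQ d2 in auto)
  ultimately show ?thesis using s1 s2 s3 by simp
qed

lemma Lw_const:
  assumes u: "u \<in> affW k"
  shows "Lw k u m = Lw k u 1"
proof (induction m rule: int_induct[of _ 1])
  case base then show ?case by simp
next
  case (step1 i) then show ?case using Lw_step[OF u, of i] by simp
next
  case (step2 i) then show ?case using Lw_step[OF u, of "i - 1"] by simp
qed

lemma Lw_nonneg: "Lw k u m \<ge> 0"
  unfolding Lw_def Fv_def by (rule sum_nonneg) simp




definition sg :: "(int\<Rightarrow>int) \<Rightarrow> int \<Rightarrow> int \<Rightarrow> int" where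
  "sg u p q = (if u p < u q then 1 else -1)"

lemma close_class: "p < q \<Longrightarrow> q < p + NN k \<Longrightarrow> p mod NN k \<noteq> q mod NN k"
proof
  assume "p < q" "q < p + NN k" "p mod NN k = q mod NN k"
  moreover then have "\<bar>p - q\<bar> < NN k" by auto
  ultimately show False using mod_eq_close[of "NN k" p q] by auto
qed

lemma Lw_change:
  assumes u: "u \<in> affW k" and ab: "okp k a b"
  shows "Lw k (u \<circ> tr k a b) a - Lw k u a = sg u a b + (\<Sum>i\<in>{a<..<b}. sg u a i + sg u i b)"
proof -
  let ?t = "tr k a b"
  define \<sigma> where "\<sigma> = (\<lambda>p::int\<times>int. (?t (fst p), ?t (snd p)))"
  let ?P = "Pset k a"
  let ?F = "\<lambda>p. Fv k u (fst p) (snd p)"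
  define Y where "Y = {(p,q). (p = a \<and> a < q \<and> q \<le> b) \<or> (q = b \<and> a < p \<and> p < b)}"
  define Ys where "Ys = {(q,p). (p = a \<and> a < q \<and> q \<le> b) \<or> (q = b \<and> a < p \<and> p < b)}"
  have abN: "a < b" "b < a + NN k" using ab unfolding okp_def by auto
  have tw: "\<And>i. a \<le> i \<Longrightarrow> i < a + NN k \<Longrightarrow> ?t i = (if i = a then b else if i = b then a else i)"
    using tr_window[OF ab] by blast
  have tinv: "\<And>i. ?t (?t i) = i" using tr_invol[OF ab] .
  have \<sigma>inv: "\<And>x. \<sigma> (\<sigma> x) = x" unfolding \<sigma>_def using tinv by simp
  have YP: "Y \<subseteq> ?P" unfolding Y_def Pset_def using abN by auto
  have fY: "finite Y" using YP Pset_finite finite_subset by blast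
  have Ysw: "Ys = prod.swap ` Y" unfolding Ys_def Y_def by force
  have sub1: "\<sigma> ` ?P \<subseteq> (?P - Y) \<union> Ys"
  proof
    fix x assume "x \<in> \<sigma> ` ?P"
    then obtain p q where pq: "(p,q) \<in> ?P" "x = \<sigma> (p,q)" by auto
    have r: "a \<le> p" "p < q" "q < a + NN k" using pq(1) unfolding Pset_def by auto
    have x: "x = (?t p, ?t q)" using pq(2) \<sigma>_def by simp
    have r2: "p < a + NN k" "a \<le> q" using r by auto
    show "x \<in> (?P - Y) \<union> Ys"
      unfolding x tw[OF r(1) r2(1)] tw[OF r2(2) r(3)] using r abN
      unfolding Pset_def Y_def Ys_def by auto
  qed
  have sub2: "\<sigma> ` ((?P - Y) \<union> Ys) \<subseteq> ?P"
  proof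
    fix x assume "x \<in> \<sigma> ` ((?P - Y) \<union> Ys)"
    then obtain p q where pq: "(p,q) \<in> (?P - Y) \<union> Ys" "x = \<sigma> (p,q)" by auto
    have r: "a \<le> p" "p < a + NN k" "a \<le> q" "q < a + NN k"
      using pq(1) abN unfolding Pset_def Ys_def by auto
    have x: "x = (?t p, ?t q)" using pq(2) \<sigma>_def by simp
    show "x \<in> ?P"
      unfolding x tw[OF r(1) r(2)] tw[OF r(3) r(4)] using pq(1) abN
      unfolding Pset_def Y_def Ys_def by auto
  qed
  have seteq: "\<sigma> ` ?P = (?P - Y) \<union> Ys"
  proof
    show "\<sigma> ` ?P \<subseteq> (?P - Y) \<union> Ys" by (rule sub1)
    show "(?P - Y) \<union> Ys \<subseteq> \<sigma> ` ?P"
    proof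
      fix x assume "x \<in> (?P - Y) \<union> Ys"
      then have "\<sigma> x \<in> ?P" using sub2 by auto
      then show "x \<in> \<sigma> ` ?P" using \<sigma>inv[of x] by (metis image_eqI)
    qed
  qed
  have disj: "(?P - Y) \<inter> Ys = {}" unfolding Pset_def Ys_def by auto
  have injs: "inj_on \<sigma> ?P" by (metis \<sigma>inv inj_on_inverseI)
  have "Lw k (u \<circ> ?t) a = (\<Sum>p\<in>?P. ?F (\<sigma> p))"
    unfolding Lw_def Fv_def \<sigma>_def by simp
  also have "\<dots> = sum ?F (\<sigma> ` ?P)" using sum.reindex[OF injs, of ?F] by (simp add: comp_def)
  also have "\<dots> = sum ?F (?P - Y) + sum ?F Ys" unfolding seteq
    by (rule sum.union_disjoint) (use Pset_finite fY Ysw disj in auto)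
  also have "sum ?F (?P - Y) = sum ?F ?P - sum ?F Y" by (rule sum_diff[OF Pset_finite YP])
  also have "sum ?F Ys = (\<Sum>y\<in>Y. ?F (prod.swap y))" unfolding Ysw
    by (subst sum.reindex) (auto simp: inj_on_def)
  finally have "Lw k (u \<circ> ?t) a - Lw k u a = (\<Sum>y\<in>Y. ?F (prod.swap y) - ?F y)"
    unfolding Lw_def by (simp add: sum_subtractf)
  also have "\<dots> = (\<Sum>y\<in>Y. sg u (fst y) (snd y))"
  proof (rule sum.cong)
    fix y assume "y \<in> Y"
    then have "y \<in> ?P" using YP by auto
    then have "fst y mod NN k \<noteq> snd y mod NN k" unfolding Pset_def using close_class by auto
    then show "?F (prod.swap y) - ?F y = sg u (fst y) (snd y)"
      using H_val[OF u] unfolding sg_def by (cases y) simp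
  qed simp
  also have "\<dots> = sg u a b + (\<Sum>i\<in>{a<..<b}. sg u a i + sg u i b)"
  proof -
    let ?M = "{a<..<b}"
    let ?G = "\<lambda>y. sg u (fst y) (snd y)"
    have Ye: "Y = insert (a,b) ((\<lambda>i. (a,i)) ` ?M \<union> (\<lambda>i. (i,b)) ` ?M)"
      unfolding Y_def using abN by auto
    have "sum ?G Y = ?G (a,b) + sum ?G ((\<lambda>i. (a,i)) ` ?M \<union> (\<lambda>i. (i,b)) ` ?M)"
      unfolding Ye by (rule sum.insert) auto
    also have "sum ?G ((\<lambda>i. (a,i)) ` ?M \<union> (\<lambda>i. (i,b)) ` ?M) =
        sum ?G ((\<lambda>i. (a,i)) ` ?M) + sum ?G ((\<lambda>i. (i,b)) ` ?M)"
      by (rule sum.union_disjoint) auto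
    also have "sum ?G ((\<lambda>i. (a,i)) ` ?M) = (\<Sum>i\<in>?M. sg u a i)"
      by (subst sum.reindex) (auto simp: inj_on_def)
    also have "sum ?G ((\<lambda>i. (i,b)) ` ?M) = (\<Sum>i\<in>?M. sg u i b)"
      by (subst sum.reindex) (auto simp: inj_on_def)
    finally show ?thesis by (simp add: sum.distrib)
  qed
  finally show ?thesis .
qed




definition NB :: "(int\<Rightarrow>int) \<Rightarrow> int \<Rightarrow> int \<Rightarrow> bool" where
  "NB u a b \<longleftrightarrow> (\<forall>i. a < i \<and> i < b \<longrightarrow> u i < u a \<or> u b < u i)"

lemma cover_Lw:
  assumes u: "u \<in> affW k" and ab: "okp k a b"
  shows "Lw k (u \<circ> tr k a b) a = Lw k u a + 1 \<longleftrightarrow> u a < u b \<and> NB u a b"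
proof -
  let ?M = "{a<..<b}"
  let ?T = "\<lambda>i. sg u a i + sg u i b"
  have ch: "Lw k (u \<circ> tr k a b) a - Lw k u a = sg u a b + sum ?T ?M" by (rule Lw_change[OF u ab])
  have inj: "inj u" by (rule affW_inj[OF u])
  have neq: "u i \<noteq> u a" "u i \<noteq> u b" if "i \<in> ?M" for i
  proof -
    have "i \<noteq> a" "i \<noteq> b" using that by auto
    then show "u i \<noteq> u a" "u i \<noteq> u b" using inj unfolding inj_def by blast+
  qed
  have ab': "a < b" using ab unfolding okp_def by simp
  have uab: "u a \<noteq> u b" using inj ab' unfolding inj_def by (metis less_irrefl)
  show ?thesis
  proof (cases "u a < u b")
    case True
    have nn: "?T i \<ge> 0" if "i \<in> ?M" for i
      unfolding sg_def using True by (simp split: if_splits)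
    have z: "?T i = 0 \<longleftrightarrow> u i < u a \<or> u b < u i" if "i \<in> ?M" for i
    proof -
      have "u i \<noteq> u a" "u i \<noteq> u b" using neq[OF that] by auto
      then show ?thesis unfolding sg_def using True by (simp split: if_splits)
    qed
    have "sum ?T ?M = 0 \<longleftrightarrow> (\<forall>i\<in>?M. ?T i = 0)" by (rule sum_nonneg_eq_0_iff) (use nn in auto)
    also have "\<dots> \<longleftrightarrow> NB u a b" unfolding NB_def using z by (simp add: Ball_def)
    finally have s0: "sum ?T ?M = 0 \<longleftrightarrow> NB u a b" .
    have s1: "sg u a b = 1" using True unfolding sg_def by simp
    have "Lw k (u \<circ> tr k a b) a = Lw k u a + 1 \<longleftrightarrow> sum ?T ?M = 0" using ch s1 by linarith
    then show ?thesis using s0 True by simp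
  next
    case False
    have np: "?T i \<le> 0" if "i \<in> ?M" for i unfolding sg_def using False by (simp split: if_splits)
    have "sum ?T ?M \<le> 0" by (rule sum_nonpos) (use np in auto)
    moreover have "sg u a b = -1" using False unfolding sg_def by simp
    ultimately have "Lw k (u \<circ> tr k a b) a \<noteq> Lw k u a + 1" using ch by linarith
    then show ?thesis using False by simp
  qed
qed

lemma okp_s: "k \<ge> 1 \<Longrightarrow> okp k i (i + 1)" unfolding okp_def by simp

lemma Lw_s:
  assumes u: "u \<in> affW k" and k: "k \<ge> 1"
  shows "Lw k (u \<circ> sgen k i) i = Lw k u i + sg u i (i+1)"
proof -
  have ch: "Lw k (u \<circ> tr k i (i+1)) i - Lw k u i = sg u i (i+1) + (\<Sum>j\<in>{i<..<i+1}. sg u i j + sg u j (i+1))"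
    by (rule Lw_change[OF u okp_s[OF k]])
  have e: "{i<..<i+1} = ({}::int set)" by auto
  have "Lw k (u \<circ> tr k i (i+1)) i = Lw k u i + sg u i (i+1)" using ch unfolding e sum.empty by linarith
  then show ?thesis unfolding sgen_def .
qed

lemma Lw_id: "Lw k id m = 0"
proof -
  have "Fv k id (fst p) (snd p) = 0" if "p \<in> Pset k m" for p
  proof -
    have "0 \<le> snd p - fst p" "snd p - fst p < NN k" using that unfolding Pset_def by auto
    then have "(snd p - fst p) div NN k = 0" by (simp add: div_pos_pos_trivial)
    then show ?thesis unfolding Fv_def by simp
  qed
  then show ?thesis unfolding Lw_def by simp
qed

abbreviation Len where "Len k u \<equiv> Lw k u 1"

lemma foldr_comp: "foldr (\<circ>) fs g = foldr (\<circ>) fs id \<circ> g"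
  by (induction fs) (auto simp: o_assoc)

lemma foldr_snoc: "foldr (\<circ>) (map f (xs @ [x])) id = foldr (\<circ>) (map f xs) id \<circ> f x"
  using foldr_comp[of "map f xs" "f x"] by simp

lemma sgen_affW: "k \<ge> 1 \<Longrightarrow> u \<in> affW k \<Longrightarrow> u \<circ> sgen k i \<in> affW k"
  unfolding sgen_def by (rule affW_tr) (auto intro: okp_s)

lemma word_bound:
  assumes k: "k \<ge> 1"
  shows "foldr (\<circ>) (map (sgen k) ws) id \<in> affW k \<and> Len k (foldr (\<circ>) (map (sgen k) ws) id) \<le> int (length ws)"
proof (induction ws rule: rev_induct)
  case Nil then show ?case using id_affW[of k] Lw_id[of k 1] by (simp add: id_def)
next
  case (snoc x xs)
  let ?v = "foldr (\<circ>) (map (sgen k) xs) id"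
  have v: "?v \<in> affW k" using snoc.IH by blast
  have w: "?v \<circ> sgen k x \<in> affW k" using sgen_affW[OF k v] .
  have "Lw k (?v \<circ> sgen k x) x = Lw k ?v x + sg ?v x (x+1)" by (rule Lw_s[OF v k])
  then have "Len k (?v \<circ> sgen k x) \<le> Len k ?v + 1"
    using Lw_const[OF v, of x] Lw_const[OF w, of x] unfolding sg_def by (auto split: if_splits)
  moreover have "Len k ?v \<le> int (length xs)" using snoc.IH by blast
  moreover have "int (length (xs @ [x])) = int (length xs) + 1" by simp
  ultimately have "Len k (?v \<circ> sgen k x) \<le> int (length (xs @ [x]))" by linarith
  then show ?case unfolding foldr_snoc[of "sgen k" xs x] using w by blast
qed

lemma sgen_invol: "k \<ge> 1 \<Longrightarrow> u \<circ> sgen k i \<circ> sgen k i = u"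
  unfolding sgen_def using tr_invol[OF okp_s] by (auto simp: fun_eq_iff)

lemma incr_id:
  assumes u: "u \<in> affW k" and inc: "\<And>i. u i < u (i + 1)"
  shows "u = id"
proof -
  have mono: "u i < u j" if "i < j" for i j
    using that
  proof (induction j rule: int_gr_induct)
    case base then show ?case using inc by simp
  next
    case (step j) then show ?case using inc[of j] by simp
  qed
  have surj: "surj u" using u unfolding affW_def bij_def by auto
  have st: "u (i + 1) = u i + 1" for i
  proof (rule ccontr)
    assume "u (i + 1) \<noteq> u i + 1"
    then have gt: "u (i+1) > u i + 1" using inc[of i] by simp
    obtain j where j: "u j = u i + 1" using surj by (metis surjD)
    show False
    proof (cases "j \<le> i")
      case True then have "u j \<le> u i" using mono[of j i] by (cases "j = i") auto
      then show False using j by simp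
    next
      case False then have "u j \<ge> u (i+1)" using mono[of "i+1" j] by (cases "j = i + 1") auto
      then show False using j gt by simp
    qed
  qed
  define c where "c = u 0"
  have form: "u i = c + i" for i
  proof (induction i rule: int_induct[of _ 0])
    case base then show ?case by (simp add: c_def)
  next
    case (step1 i) then show ?case using st[of i] by simp
  next
    case (step2 i) then show ?case using st[of "i - 1"] by simp
  qed
  have "Dsum k u 1 = (\<Sum>i\<in>{1..<1 + NN k}. c)" unfolding Dsum_def using form by simp
  also have "\<dots> = NN k * c" by simp
  finally have "NN k * c = 0" using affW_Dsum[OF u] by simp
  then have "c = 0" by simp
  then show ?thesis using form by (auto simp: fun_eq_iff)
qed

lemma word_exists:
  assumes k: "k \<ge> 1" and u: "u \<in> affW k"
  shows "\<exists>ws. length ws = nat (Len k u) \<and> set ws \<subseteq> {0..int k} \<and> u = foldr (\<circ>) (map (sgen k) ws) id"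
  using u
proof (induction "nat (Len k u)" arbitrary: u rule: less_induct)
  case less
  note u = less.prems
  show ?case
  proof (cases "\<exists>i\<in>{0..int k}. u (i + 1) < u i")
    case True
    then obtain i where i: "i \<in> {0..int k}" "u (i+1) < u i" by blast
    let ?v = "u \<circ> sgen k i"
    have v: "?v \<in> affW k" using sgen_affW[OF k u] .
    have "Lw k ?v i = Lw k u i - 1" using Lw_s[OF u k, of i] i(2) unfolding sg_def by simp
    then have L: "Len k ?v = Len k u - 1" using Lw_const[OF u, of i] Lw_const[OF v, of i] by simp
    have "Len k ?v \<ge> 0" by (rule Lw_nonneg)
    then have lt: "nat (Len k ?v) < nat (Len k u)" using L by simp
    obtain ws where ws: "length ws = nat (Len k ?v)" "set ws \<subseteq> {0..int k}" "?v = foldr (\<circ>) (map (sgen k) ws) id"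
      using less.hyps[OF lt v] by blast
    have "u = ?v \<circ> sgen k i" using sgen_invol[OF k, of u i] by simp
    also have "\<dots> = foldr (\<circ>) (map (sgen k) (ws @ [i])) id" using ws(3) foldr_snoc[of "sgen k" ws i] by simp
    finally show ?thesis using ws L \<open>Len k ?v \<ge> 0\<close> i(1)
      by (intro exI[of _ "ws @ [i]"]) auto
  next
    case False
    have inj: "inj u" by (rule affW_inj[OF u])
    have inc0: "u i < u (i + 1)" if "i \<in> {0..int k}" for i
    proof -
      have "u i \<noteq> u (i+1)" using inj by (auto dest: injD)
      moreover have "\<not> u (i + 1) < u i" using False that by blast
      ultimately show ?thesis by simp
    qed
    have inc: "u i < u (i + 1)" for i
    proof -
      define r where "r = i mod NN k"
      define m where "m = i div NN k"
      have i: "i = r + m * NN k" unfolding r_def m_def by (metis mod_div_mult_eq add.commute)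
      have r: "r \<in> {0..int k}" unfolding r_def using pos_mod_bound[of "NN k" i] pos_mod_sign[of "NN k" i] by auto
      have "u i = u r + m * NN k" using i affW_perm[OF u] by simp
      moreover have "u (i+1) = u (r+1) + m * NN k" using i affW_perm[OF u, of "r+1" m] by (simp add: algebra_simps)
      ultimately show ?thesis using inc0[OF r] by simp
    qed
    have "u = id" by (rule incr_id[OF u inc])
    then show ?thesis using Lw_id by (intro exI[of _ "[]"]) simp
  qed
qed

lemma clen_Len:
  assumes k: "k \<ge> 1" and u: "u \<in> affW k"
  shows "clen k u = nat (Len k u)"
  unfolding clen_def
proof (rule Least_equality)
  show "\<exists>ws. length ws = nat (Len k u) \<and> set ws \<subseteq> {0..int k} \<and> u = foldr (\<circ>) (map (sgen k) ws) id"
    by (rule word_exists[OF k u])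
next
  fix n assume "\<exists>ws. length ws = n \<and> set ws \<subseteq> {0..int k} \<and> u = foldr (\<circ>) (map (sgen k) ws) id"
  then obtain ws where "length ws = n" "u = foldr (\<circ>) (map (sgen k) ws) id" by blast
  then show "nat (Len k u) \<le> n" using word_bound[OF k, of ws] by (simp add: nat_le_iff)
qed

lemma clen_cover:
  assumes k: "k \<ge> 1" and u: "u \<in> affW k" and ab: "okp k a b"
  shows "clen k (u \<circ> tr k a b) = clen k u + 1 \<longleftrightarrow> u a < u b \<and> NB u a b"
proof -
  have v: "u \<circ> tr k a b \<in> affW k" by (rule affW_tr[OF u ab])
  have e1: "clen k (u \<circ> tr k a b) = nat (Lw k (u \<circ> tr k a b) a)" using clen_Len[OF k v] Lw_const[OF v, of a] by simp
  have e2: "clen k u = nat (Lw k u a)" using clen_Len[OF k u] Lw_const[OF u, of a] by simp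
  have "Lw k (u \<circ> tr k a b) a \<ge> 0" "Lw k u a \<ge> 0" by (rule Lw_nonneg)+
  then have "clen k (u \<circ> tr k a b) = clen k u + 1 \<longleftrightarrow> Lw k (u \<circ> tr k a b) a = Lw k u a + 1"
    unfolding e1 e2 by linarith
  then show ?thesis using cover_Lw[OF u ab] by simp
qed




definition rep :: "(int\<Rightarrow>int) option \<Rightarrow> zw" where
  "rep x = (case x of None \<Rightarrow> zw_zero | Some u \<Rightarrow> basis u)"

lemma topr_zero: "topr k a b zw_zero = zw_zero"
  unfolding topr_def zw_zero_def by (simp add: fun_eq_iff)

lemma topr_basis: "topr k a b (basis u) = rep (tbas k a b u)"
proof (rule ext)
  fix w
  have s: "{v. basis u v \<noteq> 0 \<and> tbas k a b v = Some w} = (if tbas k a b u = Some w then {u} else {})"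
    unfolding basis_def by auto
  show "topr k a b (basis u) w = rep (tbas k a b u) w"
    unfolding topr_def s
    by (cases "tbas k a b u") (auto simp: rep_def basis_def zw_zero_def)
qed

lemma topr_rep: "topr k a b (rep x) = rep (Option.bind x (tbas k a b))"
  by (cases x) (auto simp: rep_def topr_zero topr_basis)

lemma rep_inj: "rep x = rep y \<Longrightarrow> x = y"
proof -
  assume h: "rep x = rep y"
  show "x = y"
  proof (cases x; cases y)
    fix u v assume "x = Some u" "y = Some v"
    then have "basis u u = basis v u" using h by (simp add: rep_def)
    then show "x = y" using \<open>x = Some u\<close> \<open>y = Some v\<close> by (auto simp: basis_def split: if_splits)
  next
    fix u assume "x = Some u" "y = None"
    then have "basis u u = zw_zero u" using h by (simp add: rep_def)
    then show "x = y" by (simp add: basis_def zw_zero_def)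
  next
    fix u assume "x = None" "y = Some u"
    then have "basis u u = zw_zero u" using h by (simp add: rep_def)
    then show "x = y" by (simp add: basis_def zw_zero_def)
  qed simp
qed

lemma basis_rep: "basis u = rep (Some u)" by (simp add: rep_def)
lemma zero_rep: "zw_zero = rep None" by (simp add: rep_def)

definition opc :: "(int\<Rightarrow>int) \<Rightarrow> int \<Rightarrow> int \<Rightarrow> bool" where
  "opc u a b \<longleftrightarrow> u a \<le> 0 \<and> 0 < u b \<and> NB u a b"

lemma tbas_eq:
  assumes k: "k \<ge> 1" and u: "u \<in> affW k" and ab: "okp k a b"
  shows "tbas k a b u = (if opc u a b then Some (u \<circ> tr k a b) else None)"
  using clen_cover[OF k u ab] unfolding tbas_def opc_def by auto

lemma modp: "(x + m * NN k) mod NN k = x mod NN k" by simp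
lemma modm: "(x - m * NN k) mod NN k = x mod NN k"
proof -
  have "(x - m * NN k) = x + (- m) * NN k" by simp
  then show ?thesis by (simp only:) (rule modp)
qed

lemma affW_perm': assumes "u \<in> affW k" shows "u (i - m * NN k) = u i - m * NN k"
  using affW_perm[OF assms, of i "- m"] by simp

lemma class_ex: "x mod NN k = y mod NN k \<Longrightarrow> \<exists>m. y = x + m * NN k"
  using mod_eq_iff_ex by blast

lemma NB_shift:
  assumes u: "u \<in> affW k"
  shows "NB u (p + m * NN k) (q + m * NN k) \<longleftrightarrow> NB u p q"
proof
  assume h: "NB u (p + m * NN k) (q + m * NN k)"
  show "NB u p q" unfolding NB_def
  proof (intro allI impI)
    fix i assume "p < i \<and> i < q"
    then have "p + m * NN k < i + m * NN k \<and> i + m * NN k < q + m * NN k" by simp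
    then have "u (i + m * NN k) < u (p + m * NN k) \<or> u (q + m * NN k) < u (i + m * NN k)"
      using h unfolding NB_def by blast
    then show "u i < u p \<or> u q < u i" unfolding affW_perm[OF u] by simp
  qed
next
  assume h: "NB u p q"
  show "NB u (p + m * NN k) (q + m * NN k)" unfolding NB_def
  proof (intro allI impI)
    fix i assume "p + m * NN k < i \<and> i < q + m * NN k"
    then have "p < i - m * NN k \<and> i - m * NN k < q" by simp
    then have "u (i - m * NN k) < u p \<or> u q < u (i - m * NN k)" using h unfolding NB_def by blast
    then show "u i < u (p + m * NN k) \<or> u (q + m * NN k) < u i"
      unfolding affW_perm[OF u] affW_perm'[OF u] by linarith
  qed
qed

lemma comp_tr_affW: "u \<in> affW k \<Longrightarrow> okp k a b \<Longrightarrow> u \<circ> tr k a b \<in> affW k" by (rule affW_tr)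

lemma tr_cong: "p mod NN k = p' mod NN k \<Longrightarrow> q mod NN k = q' mod NN k \<Longrightarrow> q - p = q' - p'
  \<Longrightarrow> tr k p q = tr k p' q'"
  unfolding tr_def by (simp add: fun_eq_iff)




abbreviation Tb :: "nat \<Rightarrow> int \<Rightarrow> int \<Rightarrow> (int\<Rightarrow>int) option \<Rightarrow> (int\<Rightarrow>int) option" where
  "Tb k a b x \<equiv> Option.bind x (tbas k a b)"

lemma tbas_Some: "tbas k a b u = Some v \<Longrightarrow> v = u \<circ> tr k a b \<and> clen k (u \<circ> tr k a b) = clen k u + 1 \<and> u a \<le> 0 \<and> 0 < u b"
  unfolding tbas_def by (auto split: if_splits)

lemma tbas_None: "\<not> (u a \<le> 0 \<and> 0 < u b) \<Longrightarrow> tbas k a b u = None"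
  unfolding tbas_def by auto

lemma partC1:
  assumes u: "u \<in> affW k" and r: "a < b" "b < d" "d - a = NN k"
    and ok: "okp k a b" "okp k b d" "okp k (b - NN k) a"
  shows "Tb k b d (Tb k a b (Some u)) = Tb k (b - NN k) a (Tb k a b (Some u))"
proof (cases "tbas k a b u")
  case None then show ?thesis by simp
next
  case (Some v)
  then have v: "v = u \<circ> tr k a b" and s: "u a \<le> 0" "0 < u b" using tbas_Some by blast+
  have vW: "v \<in> affW k" using v affW_tr[OF u ok(1)] by simp
  have dd: "d = a + 1 * NN k" using r by simp
  have dm: "d mod NN k = a mod NN k" using modp[of a 1 k] dd by simp
  have bm: "b mod NN k = (b - NN k) mod NN k" using modm[of b 1 k] by simp
  have teq: "tr k b d = tr k (b - NN k) a"
    by (rule tr_cong[OF bm dm]) (use r in simp)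
  have vb: "v b = u a" using v tr_b[OF ok(1)] by simp
  have va: "v a = u b" using v tr_a[OF ok(1)] by simp
  have vd: "v d = u b + NN k" using affW_per[OF vW, of a] va dd by simp
  have vbN: "v (b - NN k) = u a - NN k" using affW_perm'[OF vW, of b 1] vb by simp
  have "tbas k b d v = tbas k (b - NN k) a v"
    unfolding tbas_def teq using vb va vd vbN s by auto
  then show ?thesis using Some by simp
qed

lemma partD:
  assumes u: "u \<in> affW k" and r: "a < b" "b < c" "c < d"
    and cl: "b mod NN k = c mod NN k" "d mod NN k = a mod NN k" "(b - a) + (d - c) = NN k"
    and ok: "okp k a b" "okp k c d" "okp k (d - NN k) c" "okp k (b - NN k) a"
  shows "Tb k c d (Tb k a b (Some u)) = Tb k (b - NN k) a (Tb k (d - NN k) c (Some u))"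
proof -
  obtain m where m: "c = b + m * NN k" using class_ex[OF cl(1)] by blast
  define e where "e = m * NN k"
  have e0: "e > 0" using r m e_def by simp
  have t1: "tr k (d - NN k) c = tr k a b"
    by (rule tr_cong) (use cl in \<open>auto simp: modm\<close>)
  have t2: "tr k (b - NN k) a = tr k c d"
    by (rule tr_cong) (use cl in \<open>auto simp: modm\<close>)
  have dN: "d - NN k = a + m * NN k" using cl(3) m by simp
  let ?v = "u \<circ> tr k a b"
  have vW: "?v \<in> affW k" using affW_tr[OF u ok(1)] .
  have u1: "u (d - NN k) = u a + e" unfolding dN e_def using affW_perm[OF u] by simp
  have u2: "u c = u b + e" unfolding m e_def using affW_perm[OF u] by simp
  have c1: "c mod NN k = b mod NN k" using cl by simp
  have v1: "u (tr k a b c) = u a + e"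
  proof -
    have "tr k a b c = c - (b - a)" by (rule tr_B[OF ok(1) c1])
    also have "\<dots> = a + m * NN k" using m by simp
    finally show ?thesis using affW_perm[OF u] e_def by simp
  qed
  have v2: "u (tr k a b d) = u b + e + NN k"
  proof -
    have "tr k a b d = d + (b - a)" by (rule tr_A[OF cl(2)])
    also have "\<dots> = b + (m + 1) * NN k" using cl(3) m by (simp add: algebra_simps)
    finally have "tr k a b d = b + (m + 1) * NN k" .
    then have "u (tr k a b d) = u b + (m + 1) * NN k" using affW_perm[OF u, of b "m+1"] by simp
    moreover have "(m + 1) * NN k = e + NN k" unfolding e_def by (simp add: distrib_right)
    ultimately show ?thesis by simp
  qed
  have v3: "u (tr k a b (b - NN k)) = u a - NN k" using affW_perm'[OF vW, of b 1] tr_b[OF ok(1)] by simp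
  have v4: "u (tr k a b a) = u b" using tr_a[OF ok(1)] by simp
  define K1 where "K1 = (clen k ?v = clen k u + 1)"
  define K2 where "K2 = (clen k (?v \<circ> tr k c d) = clen k ?v + 1)"
  have L: "Tb k c d (Tb k a b (Some u)) = (if K1 \<and> K2 \<and> u a + e \<le> 0 \<and> 0 < u b then Some (?v \<circ> tr k c d) else None)"
    unfolding tbas_def K1_def K2_def using v1 v2 e0 by auto
  have R: "Tb k (b - NN k) a (Tb k (d - NN k) c (Some u)) = (if K1 \<and> K2 \<and> u a + e \<le> 0 \<and> 0 < u b then Some (?v \<circ> tr k c d) else None)"
    unfolding tbas_def K1_def K2_def t1 t2 using u1 u2 v3 v4 e0 by auto
  show ?thesis using L R by simp
qed

lemma partB2a:
  assumes u: "u \<in> affW k" and ok: "okp k a b" "okp k c d"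
    and h: "a mod NN k = c mod NN k" "b \<le> d"
  shows "Tb k c d (Tb k a b (Some u)) = None"
proof (cases "tbas k a b u")
  case None then show ?thesis by simp
next
  case (Some v)
  then have v: "v = u \<circ> tr k a b" and s: "u a \<le> 0" "0 < u b" using tbas_Some by blast+
  obtain m where m: "c = a + m * NN k" using class_ex[OF h(1)] by blast
  have "tr k a b c = c + (b - a)" by (rule tr_A) (use h in simp)
  also have "\<dots> = b + m * NN k" using m by simp
  finally have vc: "v c = u b + m * NN k" using v affW_perm[OF u] by simp
  show ?thesis
  proof (cases "v c \<le> 0")
    case True
    then have "m * NN k < 0" using vc s by simp
    then have "m < 0" by (simp add: mult_less_0_iff)
    then have "m * NN k \<le> (-1) * NN k" by (intro mult_right_mono) simp_all
    then have "m * NN k \<le> - NN k" by simp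
    then have "d < b" using m ok unfolding okp_def by simp
    then show ?thesis using h by simp
  next
    case False
    then show ?thesis using Some tbas_None[of v c d k] by simp
  qed
qed

lemma partB2b:
  assumes u: "u \<in> affW k" and ok: "okp k a b" "okp k c d"
    and h: "b mod NN k = d mod NN k" "c \<le> a"
  shows "Tb k c d (Tb k a b (Some u)) = None"
proof (cases "tbas k a b u")
  case None then show ?thesis by simp
next
  case (Some v)
  then have v: "v = u \<circ> tr k a b" and s: "u a \<le> 0" "0 < u b" using tbas_Some by blast+
  obtain m where m: "d = b + m * NN k" using class_ex[OF h(1)] by blast
  have "tr k a b d = d - (b - a)" by (rule tr_B[OF ok(1)]) (use h in simp)
  also have "\<dots> = a + m * NN k" using m by simp
  finally have vd: "v d = u a + m * NN k" using v affW_perm[OF u] by simp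
  show ?thesis
  proof (cases "0 < v d")
    case True
    then have "m * NN k > 0" using vd s by simp
    then have "m > 0" by (simp add: zero_less_mult_iff)
    then have "m * NN k \<ge> 1 * NN k" by (intro mult_right_mono) simp_all
    then have "d \<ge> b + NN k" using m by simp
    then show ?thesis using h ok unfolding okp_def by linarith
  next
    case False
    then show ?thesis using Some tbas_None[of v c d k] by simp
  qed
qed

lemma partF1:
  assumes u: "u \<in> affW k" and r: "a < b" "b < c" "c - a < NN k" and ok: "okp k a b" "okp k b c"
  shows "Tb k b c (Tb k a b (Tb k b c (Some u))) = None"
proof (cases "tbas k b c u")
  case None then show ?thesis by simp
next
  case (Some v)
  then have v: "v = u \<circ> tr k b c" and s: "u b \<le> 0" using tbas_Some by blast+
  show ?thesis
  proof (cases "tbas k a b v")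
    case None then show ?thesis using Some by simp
  next
    case (Some w)
    then have w: "w = v \<circ> tr k a b" using tbas_Some by blast
    have c1: "c mod NN k \<noteq> a mod NN k" using close_class[of a c k] r by simp
    have c2: "c mod NN k \<noteq> b mod NN k" using close_class[of b c k] r by simp
    have "w c = u b" using w v tr_O[OF c1 c2] tr_b[OF ok(2)] by simp
    then have "tbas k b c w = None" using s tbas_None[of w b c k] by simp
    then show ?thesis using \<open>tbas k b c u = Some v\<close> Some by simp
  qed
qed

lemma partF2:
  assumes u: "u \<in> affW k" and r: "a < b" "b < c" "c - a < NN k" and ok: "okp k a b" "okp k b c"
  shows "Tb k a b (Tb k b c (Tb k a b (Some u))) = None"
proof (cases "tbas k a b u")
  case None then show ?thesis by simp
next
  case (Some v)
  then have v: "v = u \<circ> tr k a b" and s: "0 < u b" using tbas_Some by blast+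
  show ?thesis
  proof (cases "tbas k b c v")
    case None then show ?thesis using Some by simp
  next
    case (Some w)
    then have w: "w = v \<circ> tr k b c" using tbas_Some by blast
    have c1: "a mod NN k \<noteq> b mod NN k" using close_class[of a b k] r by simp
    have c2: "a mod NN k \<noteq> c mod NN k" using close_class[of a c k] r by simp
    have "w a = u b" using w v tr_O[OF c1 c2] tr_a[OF ok(1)] by simp
    then have "tbas k a b w = None" using s tbas_None[of w a b k] by simp
    then show ?thesis using \<open>tbas k a b u = Some v\<close> Some by simp
  qed
qed




lemma trA_p: "tr k a b (a + m * NN k) = b + m * NN k"
  using tr_A[OF modp[of a m k]] by simp
lemma trB_p: "okp k a b \<Longrightarrow> tr k a b (b + m * NN k) = a + m * NN k"
  using tr_B[OF _ modp[of b m k]] by simp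
lemma trA_m: "tr k a b (a - m * NN k) = b - m * NN k"
  using tr_A[OF modm[of a m k]] by simp
lemma trB_m: "okp k a b \<Longrightarrow> tr k a b (b - m * NN k) = a - m * NN k"
  using tr_B[OF _ modm[of b m k]] by simp

lemma NB_at: "NB u a b \<Longrightarrow> a < i \<Longrightarrow> i < b \<Longrightarrow> u i < u a \<or> u b < u i"
  unfolding NB_def by blast

lemma inj_neq: "u \<in> affW k \<Longrightarrow> i \<noteq> j \<Longrightarrow> u i \<noteq> u j"
  using affW_inj unfolding inj_def by blast

lemma A_key1:
  assumes u: "u \<in> affW k" and ab: "okp k a b" and cd: "okp k c d"
    and cl: "a mod NN k \<noteq> c mod NN k" "a mod NN k \<noteq> d mod NN k"
            "b mod NN k \<noteq> c mod NN k" "b mod NN k \<noteq> d mod NN k"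
    and uab: "u a < u b" and nab: "NB u a b" and nv: "NB (u \<circ> tr k a b) c d"
  shows "NB u c d"
  unfolding NB_def
proof (intro allI impI)
  fix i assume i: "c < i \<and> i < d"
  let ?t = "tr k a b"
  have abr: "a < b" using ab unfolding okp_def by simp
  have vc: "u (?t c) = u c" using tr_O cl by (metis)
  have vd: "u (?t d) = u d" using tr_O cl by (metis)
  have nvi: "u (?t p) < u c \<or> u d < u (?t p)" if "c < p" "p < d" for p
    using NB_at[OF nv that] vc vd by simp
  show "u i < u c \<or> u d < u i"
  proof (rule ccontr)
    assume "\<not> (u i < u c \<or> u d < u i)"
    moreover have "u i \<noteq> u c" "u i \<noteq> u d" using i inj_neq[OF u] by auto
    ultimately have h: "u c < u i" "u i < u d" by auto
    consider (A) "i mod NN k = a mod NN k" | (B) "i mod NN k = b mod NN k"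
      | (O) "i mod NN k \<noteq> a mod NN k" "i mod NN k \<noteq> b mod NN k" by blast
    then show False
    proof cases
      case O
      then have "?t i = i" by (rule tr_O)
      then show False using nvi[of i] i h by simp
    next
      case A
      obtain m where m: "i = a + m * NN k" using class_ex[OF A[symmetric]] by blast
      have ti: "u (?t i) = u b + m * NN k" using m trA_p affW_perm[OF u] by simp
      have ui: "u i = u a + m * NN k" using m affW_perm[OF u] by simp
      have g: "u d < u b + m * NN k" using nvi[of i] i ti ui uab h by auto
      define j where "j = d - m * NN k"
      have uj: "u j = u d - m * NN k" unfolding j_def by (rule affW_perm'[OF u])
      have j1: "u a < u j" "u j < u b" using uj ui h g by auto
      have jm: "j mod NN k = d mod NN k" unfolding j_def by (rule modm)
      have ja: "a < j" using i m j_def by simp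
      have jb: "j \<noteq> b" using jm cl by auto
      show False
      proof (cases "j < b")
        case True
        then show False using NB_at[OF nab ja True] j1 by auto
      next
        case False
        define p where "p = b + m * NN k"
        have p1: "c < p" "p < d" using p_def m i abr False jb j_def by auto
        have "?t p = i" using trB_p[OF ab] p_def m by simp
        then show False using nvi[OF p1] h by simp
      qed
    next
      case B
      obtain m where m: "i = b + m * NN k" using class_ex[OF B[symmetric]] by blast
      have ti: "u (?t i) = u a + m * NN k" using m trB_p[OF ab] affW_perm[OF u] by simp
      have ui: "u i = u b + m * NN k" using m affW_perm[OF u] by simp
      have g: "u a + m * NN k < u c" using nvi[of i] i ti ui uab h by auto
      define j where "j = c - m * NN k"
      have uj: "u j = u c - m * NN k" unfolding j_def by (rule affW_perm'[OF u])
      have j1: "u a < u j" "u j < u b" using uj ui h g by auto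
      have jm: "j mod NN k = c mod NN k" unfolding j_def by (rule modm)
      have jb: "j < b" using i m j_def by simp
      have ja: "j \<noteq> a" using jm cl by auto
      show False
      proof (cases "a < j")
        case True
        then show False using NB_at[OF nab True jb] j1 by auto
      next
        case False
        define p where "p = a + m * NN k"
        have p1: "c < p" "p < d" using p_def m i abr False ja j_def by auto
        have "?t p = i" using trA_p p_def m by simp
        then show False using nvi[OF p1] h by simp
      qed
    qed
  qed
qed

lemma A_key2:
  assumes u: "u \<in> affW k" and ab: "okp k a b" and cd: "okp k c d"
    and cl: "a mod NN k \<noteq> c mod NN k" "a mod NN k \<noteq> d mod NN k"
            "b mod NN k \<noteq> c mod NN k" "b mod NN k \<noteq> d mod NN k"
    and uab: "u a < u b" and ucd: "u c < u d" and nab: "NB u a b" and nv: "NB (u \<circ> tr k a b) c d"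
  shows "NB (u \<circ> tr k c d) a b"
  unfolding NB_def
proof (intro allI impI)
  fix i assume i: "a < i \<and> i < b"
  let ?t = "tr k a b"
  let ?s = "tr k c d"
  have cdr: "c < d" using cd unfolding okp_def by simp
  have wa: "u (?s a) = u a" using tr_O cl by (metis)
  have wb: "u (?s b) = u b" using tr_O cl by (metis)
  have vc: "u (?t c) = u c" using tr_O cl by (metis)
  have vd: "u (?t d) = u d" using tr_O cl by (metis)
  have nvi: "u (?t p) < u c \<or> u d < u (?t p)" if "c < p" "p < d" for p
    using NB_at[OF nv that] vc vd by simp
  have wW: "u \<circ> ?s \<in> affW k" by (rule affW_tr[OF u cd])
  show "(u \<circ> ?s) i < (u \<circ> ?s) a \<or> (u \<circ> ?s) b < (u \<circ> ?s) i"
  proof (rule ccontr)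
    assume "\<not> ((u \<circ> ?s) i < (u \<circ> ?s) a \<or> (u \<circ> ?s) b < (u \<circ> ?s) i)"
    moreover have "(u \<circ> ?s) i \<noteq> (u \<circ> ?s) a" "(u \<circ> ?s) i \<noteq> (u \<circ> ?s) b" using i inj_neq[OF wW] by auto
    ultimately have h: "u a < u (?s i)" "u (?s i) < u b" using wa wb by auto
    consider (C) "i mod NN k = c mod NN k" | (D) "i mod NN k = d mod NN k"
      | (O) "i mod NN k \<noteq> c mod NN k" "i mod NN k \<noteq> d mod NN k" by blast
    then show False
    proof cases
      case O
      then have "?s i = i" by (rule tr_O)
      then show False using NB_at[OF nab, of i] i h by simp
    next
      case C
      obtain m where m: "i = c + m * NN k" using class_ex[OF C[symmetric]] by blast
      have si: "?s i = d + m * NN k" using m trA_p by simp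
      have usi: "u (?s i) = u d + m * NN k" using si affW_perm[OF u] by simp
      have ui: "u i = u c + m * NN k" using m affW_perm[OF u] by simp
      have g: "u i < u a" using NB_at[OF nab, of i] i ui usi ucd h by auto
      define p where "p = d + m * NN k"
      have pa: "a < p" using p_def m i cdr by simp
      have pm: "p mod NN k = d mod NN k" unfolding p_def by (rule modp)
      have pb: "p \<noteq> b" using pm cl by auto
      show False
      proof (cases "p < b")
        case True
        then show False using NB_at[OF nab pa True] h si p_def by auto
      next
        case False
        define q where "q = b - m * NN k"
        have q1: "c < q" "q < d" using q_def p_def m i False pb by auto
        have tq: "?t q = a - m * NN k" using trB_m[OF ab] q_def by simp
        have "u (?t q) = u a - m * NN k" using tq affW_perm'[OF u] by simp
        then show False using nvi[OF q1] g ui h usi by auto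
      qed
    next
      case D
      obtain m where m: "i = d + m * NN k" using class_ex[OF D[symmetric]] by blast
      have si: "?s i = c + m * NN k" using m trB_p[OF cd] by simp
      have usi: "u (?s i) = u c + m * NN k" using si affW_perm[OF u] by simp
      have ui: "u i = u d + m * NN k" using m affW_perm[OF u] by simp
      have g: "u b < u i" using NB_at[OF nab, of i] i ui usi ucd h by auto
      define p where "p = c + m * NN k"
      have pb: "p < b" using p_def m i cdr by simp
      have pm: "p mod NN k = c mod NN k" unfolding p_def by (rule modp)
      have pa: "p \<noteq> a" using pm cl by auto
      show False
      proof (cases "a < p")
        case True
        then show False using NB_at[OF nab True pb] h si p_def by auto
      next
        case False
        define q where "q = a - m * NN k"
        have q1: "c < q" "q < d" using q_def p_def m i False pa by auto
        have tq: "?t q = b - m * NN k" using trA_m q_def by simp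
        have "u (?t q) = u b - m * NN k" using tq affW_perm'[OF u] by simp
        then show False using nvi[OF q1] g ui h usi by auto
      qed
    qed
  qed
qed




lemma clsA: "i mod NN k = a mod NN k \<Longrightarrow> (i + (b - a)) mod NN k = b mod NN k"
proof -
  assume "i mod NN k = a mod NN k"
  then have "(i + (b - a)) mod NN k = (a + (b - a)) mod NN k" by (rule mod_add_cong) simp
  then show ?thesis by simp
qed
lemma clsB: "i mod NN k = b mod NN k \<Longrightarrow> (i - (b - a)) mod NN k = a mod NN k"
proof -
  assume "i mod NN k = b mod NN k"
  then have "(i - (b - a)) mod NN k = (b - (b - a)) mod NN k" by (rule mod_diff_cong) simp
  then show ?thesis by simp
qed

lemma tr_comm:
  assumes ab: "okp k a b" and cd: "okp k c d"
    and cl: "a mod NN k \<noteq> c mod NN k" "a mod NN k \<noteq> d mod NN k"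
            "b mod NN k \<noteq> c mod NN k" "b mod NN k \<noteq> d mod NN k"
  shows "tr k a b (tr k c d i) = tr k c d (tr k a b i)"
proof -
  have abm: "a mod NN k \<noteq> b mod NN k" by (rule okp_mod[OF ab])
  have cdm: "c mod NN k \<noteq> d mod NN k" by (rule okp_mod[OF cd])
  consider (A) "i mod NN k = a mod NN k" | (B) "i mod NN k = b mod NN k" | (C) "i mod NN k = c mod NN k"
    | (D) "i mod NN k = d mod NN k"
    | (O) "i mod NN k \<noteq> a mod NN k" "i mod NN k \<noteq> b mod NN k" "i mod NN k \<noteq> c mod NN k" "i mod NN k \<noteq> d mod NN k"
    by blast
  then show ?thesis
  proof cases
    case A
    have 1: "tr k c d i = i" using A cl by (intro tr_O) auto
    have 2: "tr k a b i = i + (b - a)" using tr_A[OF A] .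
    have "tr k c d (i + (b - a)) = i + (b - a)" using clsA[OF A, of b] cl by (intro tr_O) auto
    then show ?thesis using 1 2 by simp
  next
    case B
    have 1: "tr k c d i = i" using B cl by (intro tr_O) auto
    have 2: "tr k a b i = i - (b - a)" using tr_B[OF ab B] .
    have "tr k c d (i - (b - a)) = i - (b - a)" using clsB[OF B, of a] cl by (intro tr_O) auto
    then show ?thesis using 1 2 by simp
  next
    case C
    have 1: "tr k a b i = i" using C cl by (intro tr_O) auto
    have 2: "tr k c d i = i + (d - c)" using tr_A[OF C] .
    have "tr k a b (i + (d - c)) = i + (d - c)" using clsA[OF C, of d] cl by (intro tr_O) auto
    then show ?thesis using 1 2 by simp
  next
    case D
    have 1: "tr k a b i = i" using D cl by (intro tr_O) auto
    have 2: "tr k c d i = i - (d - c)" using tr_B[OF cd D] .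
    have "tr k a b (i - (d - c)) = i - (d - c)" using clsB[OF D, of c] cl by (intro tr_O) auto
    then show ?thesis using 1 2 by simp
  next
    case O
    then show ?thesis using tr_O by simp
  qed
qed

lemma partA:
  assumes k: "k \<ge> 1" and u: "u \<in> affW k" and ab: "okp k a b" and cd: "okp k c d"
    and cl: "a mod NN k \<noteq> c mod NN k" "a mod NN k \<noteq> d mod NN k"
            "b mod NN k \<noteq> c mod NN k" "b mod NN k \<noteq> d mod NN k"
  shows "Tb k c d (Tb k a b (Some u)) = Tb k a b (Tb k c d (Some u))"
proof -
  let ?v = "u \<circ> tr k a b" and ?w = "u \<circ> tr k c d"
  have vW: "?v \<in> affW k" by (rule affW_tr[OF u ab])
  have wW: "?w \<in> affW k" by (rule affW_tr[OF u cd])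
  have vc: "?v c = u c" "?v d = u d" using tr_O cl by (metis comp_apply)+
  have wa: "?w a = u a" "?w b = u b" using tr_O cl by (metis comp_apply)+
  have cl': "c mod NN k \<noteq> a mod NN k" "c mod NN k \<noteq> b mod NN k"
            "d mod NN k \<noteq> a mod NN k" "d mod NN k \<noteq> b mod NN k" using cl by auto
  have eq: "?v \<circ> tr k c d = ?w \<circ> tr k a b"
    using tr_comm[OF ab cd cl] by (auto simp: fun_eq_iff)
  have iff: "opc u a b \<and> opc ?v c d \<longleftrightarrow> opc u c d \<and> opc ?w a b"
  proof
    assume h: "opc u a b \<and> opc ?v c d"
    then have s: "u a \<le> 0" "0 < u b" "u c \<le> 0" "0 < u d" "NB u a b" "NB ?v c d"
      unfolding opc_def vc by auto
    have "NB u c d" by (rule A_key1[OF u ab cd cl]) (use s in auto)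
    moreover have "NB ?w a b" by (rule A_key2[OF u ab cd cl]) (use s in auto)
    ultimately show "opc u c d \<and> opc ?w a b" unfolding opc_def wa using s by simp
  next
    assume h: "opc u c d \<and> opc ?w a b"
    then have s: "u a \<le> 0" "0 < u b" "u c \<le> 0" "0 < u d" "NB u c d" "NB ?w a b"
      unfolding opc_def wa by auto
    have "NB u a b" by (rule A_key1[OF u cd ab cl']) (use s in auto)
    moreover have "NB ?v c d" by (rule A_key2[OF u cd ab cl']) (use s in auto)
    ultimately show "opc u a b \<and> opc ?v c d" unfolding opc_def vc using s by simp
  qed
  have L: "Tb k c d (Tb k a b (Some u)) = (if opc u a b \<and> opc ?v c d then Some (?v \<circ> tr k c d) else None)"
    using tbas_eq[OF k u ab] tbas_eq[OF k vW cd] by simp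
  have R: "Tb k a b (Tb k c d (Some u)) = (if opc u c d \<and> opc ?w a b then Some (?w \<circ> tr k a b) else None)"
    using tbas_eq[OF k u cd] tbas_eq[OF k wW ab] by simp
  show ?thesis using L R iff eq by simp
qed

lemma W0_lem:
  assumes u: "u \<in> affW0 k" and pq: "p < q" and h: "1 \<le> u q" "u q < u p" "u p \<le> NN k"
  shows False
proof -
  have uW: "u \<in> affW k" using u unfolding affW0_def by simp
  have "inv u (u q) < inv u (u p)" using u h unfolding affW0_def by auto
  then have "q < p" using affW_inj[OF uW] by (simp add: inv_f_f)
  then show False using pq by simp
qed

lemma partB1a:
  assumes k: "k \<ge> 1" and u: "u \<in> affW k" and ab: "okp k a b" and cd: "okp k c d"
    and r: "a < c" "c < b" "b < d"
  shows "Tb k c d (Tb k a b (Some u)) = None \<and> Tb k a b (Tb k c d (Some u)) = None"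
proof
  have rab: "b - a \<le> int k" and rcd: "d - c \<le> int k" using ab cd unfolding okp_def by auto
  have c1: "c mod NN k \<noteq> a mod NN k" "c mod NN k \<noteq> b mod NN k"
    using close_class[of a c k] close_class[of c b k] r rab by auto
  have b1: "b mod NN k \<noteq> c mod NN k" "b mod NN k \<noteq> d mod NN k"
    using close_class[of c b k] close_class[of b d k] r rcd by auto
  show "Tb k c d (Tb k a b (Some u)) = None"
  proof (cases "opc u a b")
    case False then show ?thesis using tbas_eq[OF k u ab] by simp
  next
    case True
    let ?v = "u \<circ> tr k a b"
    have vW: "?v \<in> affW k" by (rule affW_tr[OF u ab])
    have vc: "?v c = u c" using tr_O[OF c1] by simp
    have vb: "?v b = u a" using tr_b[OF ab] by simp
    have s: "u a \<le> 0" "0 < u b" "NB u a b" using True unfolding opc_def by auto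
    have "\<not> opc ?v c d"
    proof
      assume o: "opc ?v c d"
      have "u c < u a \<or> u b < u c" using NB_at[OF s(3) r(1) r(2)] .
      then have "u c < u a" using o vc s unfolding opc_def by auto
      moreover have "?v b < ?v c \<or> ?v d < ?v b" using NB_at[of ?v c d b] o r unfolding opc_def by blast
      ultimately show False using o vb vc s unfolding opc_def by auto
    qed
    then show ?thesis using tbas_eq[OF k u ab] tbas_eq[OF k vW cd] True by simp
  qed
  show "Tb k a b (Tb k c d (Some u)) = None"
  proof (cases "opc u c d")
    case False then show ?thesis using tbas_eq[OF k u cd] by simp
  next
    case True
    let ?w = "u \<circ> tr k c d"
    have wW: "?w \<in> affW k" by (rule affW_tr[OF u cd])
    have wb: "?w b = u b" using tr_O[OF b1] by simp
    have wc: "?w c = u d" using tr_a[OF cd] by simp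
    have s: "u c \<le> 0" "0 < u d" "NB u c d" using True unfolding opc_def by auto
    have "\<not> opc ?w a b"
    proof
      assume o: "opc ?w a b"
      have "u b < u c \<or> u d < u b" using NB_at[OF s(3) r(2) r(3)] .
      then have "u d < u b" using o wb s unfolding opc_def by auto
      moreover have "?w c < ?w a \<or> ?w b < ?w c" using NB_at[of ?w a b c] o r unfolding opc_def by blast
      ultimately show False using o wb wc s unfolding opc_def by auto
    qed
    then show ?thesis using tbas_eq[OF k u cd] tbas_eq[OF k wW ab] True by simp
  qed
qed

lemma partB1b:
  assumes k: "k \<ge> 1" and u0: "u \<in> affW0 k" and ab: "okp k a b" and bd: "okp k b d"
    and r: "d - a > NN k"
  shows "Tb k b d (Tb k a b (Some u)) = None \<and> Tb k a b (Tb k b d (Some u)) = None"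
proof
  have u: "u \<in> affW k" using u0 unfolding affW0_def by simp
  have rab: "a < b" "b - a \<le> int k" and rbd: "b < d" "d - b \<le> int k" using ab bd unfolding okp_def by auto
  have dab: "d mod NN k \<noteq> a mod NN k" "d mod NN k \<noteq> b mod NN k"
  proof -
    show "d mod NN k \<noteq> b mod NN k" using close_class[of b d k] rbd by auto
    show "d mod NN k \<noteq> a mod NN k"
    proof
      assume "d mod NN k = a mod NN k"
      then have "d mod NN k = (a + 1 * NN k) mod NN k" using modp[of a 1 k] by simp
      moreover have "\<bar>d - (a + 1 * NN k)\<bar> < NN k" using r rab rbd by simp
      ultimately have "d = a + 1 * NN k" using mod_eq_close[of "NN k"] by simp
      then show False using r by simp
    qed
  qed
  have adm: "a mod NN k \<noteq> b mod NN k" "a mod NN k \<noteq> d mod NN k" using dab okp_mod[OF ab] by auto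
  have m1: "a < d - NN k" "d - NN k < b" using r rbd by auto
  have m2: "b < a + NN k" "a + NN k < d" using r rab by auto
  show "Tb k b d (Tb k a b (Some u)) = None"
  proof (cases "opc u a b")
    case False then show ?thesis using tbas_eq[OF k u ab] by simp
  next
    case True
    let ?v = "u \<circ> tr k a b"
    have vW: "?v \<in> affW k" by (rule affW_tr[OF u ab])
    have s: "u a \<le> 0" "0 < u b" "NB u a b" using True unfolding opc_def by auto
    have vd: "?v d = u d" using tr_O[OF dab] by simp
    have vb: "?v b = u a" using tr_b[OF ab] by simp
    have vaN: "?v (a + 1 * NN k) = u b + NN k" using trA_p[of k a b 1] affW_perm[OF u, of b 1] by simp
    have "\<not> opc ?v b d"
    proof
      assume o: "opc ?v b d"
      have "?v (a + 1 * NN k) < ?v b \<or> ?v d < ?v (a + 1 * NN k)"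
        using NB_at[of ?v b d "a + 1 * NN k"] o m2 unfolding opc_def by simp
      then have g1: "u d < u b + NN k" using vaN vb vd s by auto
      have "u (d - 1 * NN k) < u a \<or> u b < u (d - 1 * NN k)" using NB_at[OF s(3)] m1 by simp
      then have g2: "u d < u a + NN k" using affW_perm'[OF u, of d 1] g1 by auto
      have "0 < u d" using o vd unfolding opc_def by simp
      then show False using W0_lem[OF u0 m2(2), of] affW_perm[OF u, of a 1] g2 s by simp
    qed
    then show ?thesis using tbas_eq[OF k u ab] tbas_eq[OF k vW bd] True by simp
  qed
  show "Tb k a b (Tb k b d (Some u)) = None"
  proof (cases "opc u b d")
    case False then show ?thesis using tbas_eq[OF k u bd] by simp
  next
    case True
    let ?w = "u \<circ> tr k b d"
    have wW: "?w \<in> affW k" by (rule affW_tr[OF u bd])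
    have s: "u b \<le> 0" "0 < u d" "NB u b d" using True unfolding opc_def by auto
    have wa: "?w a = u a" using tr_O adm by simp
    have wb: "?w b = u d" using tr_a[OF bd] by simp
    have wdN: "?w (d - 1 * NN k) = u b - NN k" using trB_m[OF bd, of 1] affW_perm'[OF u, of b 1] by simp
    have "\<not> opc ?w a b"
    proof
      assume o: "opc ?w a b"
      have "?w (d - 1 * NN k) < ?w a \<or> ?w b < ?w (d - 1 * NN k)"
        using NB_at[of ?w a b "d - 1 * NN k"] o m1 unfolding opc_def by simp
      then have g1: "u b < u a + NN k" using wdN wa wb s by auto
      have "u (a + 1 * NN k) < u b \<or> u d < u (a + 1 * NN k)" using NB_at[OF s(3)] m2 by simp
      then have g2: "u d < u a + NN k" using affW_perm[OF u, of a 1] g1 by auto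
      have "u a \<le> 0" using o wa unfolding opc_def by simp
      then show False using W0_lem[OF u0 m2(2)] affW_perm[OF u, of a 1] g2 s by simp
    qed
    then show ?thesis using tbas_eq[OF k u bd] tbas_eq[OF k wW ab] True by simp
  qed
qed




lemma cls_pin0: "i mod NN k = x mod NN k \<Longrightarrow> x - NN k < i \<Longrightarrow> i < x + NN k \<Longrightarrow> i = x"
  using mod_eq_close[of "NN k" i x] by auto

lemma cls_pinm: "i mod NN k = x mod NN k \<Longrightarrow> x - 2 * NN k < i \<Longrightarrow> i < x \<Longrightarrow> i = x - NN k"
proof -
  assume h: "i mod NN k = x mod NN k" "x - 2 * NN k < i" "i < x"
  have "(x - 1 * NN k) mod NN k = x mod NN k" by (rule modm)
  then have "i mod NN k = (x - 1 * NN k) mod NN k" using h by simp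
  moreover have "\<bar>i - (x - 1 * NN k)\<bar> < NN k" using h by simp
  ultimately show ?thesis using mod_eq_close[of "NN k" i "x - 1 * NN k"] by simp
qed

lemma cls_pinp: "i mod NN k = x mod NN k \<Longrightarrow> x < i \<Longrightarrow> i < x + 2 * NN k \<Longrightarrow> i = x + NN k"
proof -
  assume h: "i mod NN k = x mod NN k" "x < i" "i < x + 2 * NN k"
  have "(x + 1 * NN k) mod NN k = x mod NN k" by (rule modp)
  then have "i mod NN k = (x + 1 * NN k) mod NN k" using h by simp
  moreover have "\<bar>i - (x + 1 * NN k)\<bar> < NN k" using h by simp
  ultimately show ?thesis using mod_eq_close[of "NN k" i "x + 1 * NN k"] by simp
qed

lemma ncl: "p < q \<Longrightarrow> q < p + NN k \<Longrightarrow> q mod NN k \<noteq> p mod NN k"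
  using close_class[of p q k] by auto

locale Eset =
  fixes k :: nat and a b c d :: int
  assumes r: "a < b" "b < c" "c < d" "c - a \<le> int k" "d - b \<le> int k"
begin

lemma oks: "okp k a b" "okp k b c" "okp k c d" "okp k a c" "okp k b d"
  using r unfolding okp_def by auto

lemma cls: "a mod NN k \<noteq> b mod NN k" "a mod NN k \<noteq> c mod NN k" "b mod NN k \<noteq> c mod NN k"
  "b mod NN k \<noteq> d mod NN k" "c mod NN k \<noteq> d mod NN k"
  "b mod NN k \<noteq> a mod NN k" "c mod NN k \<noteq> a mod NN k" "c mod NN k \<noteq> b mod NN k"
  "d mod NN k \<noteq> b mod NN k" "d mod NN k \<noteq> c mod NN k"
  using ncl[of a b k] ncl[of a c k] ncl[of b c k] ncl[of b d k] ncl[of c d k] r by auto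

lemma clad: "d mod NN k = a mod NN k \<longleftrightarrow> d = a + NN k"
proof
  assume "d mod NN k = a mod NN k"
  then show "d = a + NN k" using cls_pinp[of d k a] r by simp
next
  assume "d = a + NN k"
  then show "d mod NN k = a mod NN k" using modp[of a 1 k] by simp
qed

lemma E_tr: "tr k b c (tr k c d (tr k a c i)) = tr k b d (tr k a b (tr k b c i))"
proof -
  note ok = oks
  consider (A) "i mod NN k = a mod NN k" | (B) "i mod NN k = b mod NN k" | (C) "i mod NN k = c mod NN k"
    | (D) "i mod NN k = d mod NN k" "i mod NN k \<noteq> a mod NN k"
    | (O) "i mod NN k \<noteq> a mod NN k" "i mod NN k \<noteq> b mod NN k" "i mod NN k \<noteq> c mod NN k" "i mod NN k \<noteq> d mod NN k"
    by blast
  then show ?thesis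
  proof cases
    case A
    have x1: "tr k a c i = i + (c - a)" by (rule tr_A[OF A])
    have c1: "(i + (c - a)) mod NN k = c mod NN k" by (rule clsA[OF A])
    have x2: "tr k c d (i + (c - a)) = i + (c - a) + (d - c)" by (rule tr_A[OF c1])
    have c2: "(i + (c - a) + (d - c)) mod NN k = d mod NN k" by (rule clsA[OF c1])
    have x3: "tr k b c (i + (c - a) + (d - c)) = i + (c - a) + (d - c)" using c2 cls by (intro tr_O) auto
    have y1: "tr k b c i = i" using A cls by (intro tr_O) auto
    have y2: "tr k a b i = i + (b - a)" by (rule tr_A[OF A])
    have c3: "(i + (b - a)) mod NN k = b mod NN k" by (rule clsA[OF A])
    have y3: "tr k b d (i + (b - a)) = i + (b - a) + (d - b)" by (rule tr_A[OF c3])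
    show ?thesis using x1 x2 x3 y1 y2 y3 by simp
  next
    case B
    have x1: "tr k a c i = i" using B cls by (intro tr_O) auto
    have x2: "tr k c d i = i" using B cls by (intro tr_O) auto
    have x3: "tr k b c i = i + (c - b)" by (rule tr_A[OF B])
    have c1: "(i + (c - b)) mod NN k = c mod NN k" by (rule clsA[OF B])
    have y2: "tr k a b (i + (c - b)) = i + (c - b)" using c1 cls by (intro tr_O) auto
    have y3: "tr k b d (i + (c - b)) = i + (c - b)" using c1 cls by (intro tr_O) auto
    show ?thesis using x1 x2 x3 y2 y3 by simp
  next
    case C
    have x1: "tr k a c i = i - (c - a)" by (rule tr_B[OF ok(4) C])
    have c1: "(i - (c - a)) mod NN k = a mod NN k" by (rule clsB[OF C])
    have y1: "tr k b c i = i - (c - b)" by (rule tr_B[OF ok(2) C])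
    have c2: "(i - (c - b)) mod NN k = b mod NN k" by (rule clsB[OF C])
    have y2: "tr k a b (i - (c - b)) = i - (c - b) - (b - a)" by (rule tr_B[OF ok(1) c2])
    have c3: "(i - (c - b) - (b - a)) mod NN k = a mod NN k" by (rule clsB[OF c2])
    show ?thesis
    proof (cases "d mod NN k = a mod NN k")
      case True
      have c1': "(i - (c - a)) mod NN k = d mod NN k" using c1 True by simp
      have x2: "tr k c d (i - (c - a)) = i - (c - a) - (d - c)" by (rule tr_B[OF ok(3) c1'])
      have c4: "(i - (c - a) - (d - c)) mod NN k = c mod NN k" by (rule clsB[OF c1'])
      have x3: "tr k b c (i - (c - a) - (d - c)) = i - (c - a) - (d - c) - (c - b)" by (rule tr_B[OF ok(2) c4])
      have c3': "(i - (c - b) - (b - a)) mod NN k = d mod NN k" using c3 True by simp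
      have y3: "tr k b d (i - (c - b) - (b - a)) = i - (c - b) - (b - a) - (d - b)" by (rule tr_B[OF ok(5) c3'])
      show ?thesis using x1 x2 x3 y1 y2 y3 by simp
    next
      case False
      have x2: "tr k c d (i - (c - a)) = i - (c - a)" using c1 cls False by (intro tr_O) auto
      have x3: "tr k b c (i - (c - a)) = i - (c - a)" using c1 cls by (intro tr_O) auto
      have y3: "tr k b d (i - (c - b) - (b - a)) = i - (c - b) - (b - a)" using c3 cls False by (intro tr_O) auto
      show ?thesis using x1 x2 x3 y1 y2 y3 by simp
    qed
  next
    case D
    have x1: "tr k a c i = i" using D cls by (intro tr_O) auto
    have x2: "tr k c d i = i - (d - c)" by (rule tr_B[OF ok(3) D(1)])
    have c1: "(i - (d - c)) mod NN k = c mod NN k" by (rule clsB[OF D(1)])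
    have x3: "tr k b c (i - (d - c)) = i - (d - c) - (c - b)" by (rule tr_B[OF ok(2) c1])
    have y1: "tr k b c i = i" using D cls by (intro tr_O) auto
    have y2: "tr k a b i = i" using D cls by (intro tr_O) auto
    have y3: "tr k b d i = i - (d - b)" by (rule tr_B[OF ok(5) D(1)])
    show ?thesis using x1 x2 x3 y1 y2 y3 by simp
  next
    case O
    then show ?thesis using tr_O by simp
  qed
qed

lemma E_tr2: "tr k a c (tr k c d (tr k b c i)) = tr k b c (tr k a b (tr k b d i))"
proof -
  note ok = oks
  let ?j = "tr k b c (tr k a b (tr k b d i))"
  have "tr k b c (tr k c d (tr k a c ?j)) = tr k b d (tr k a b (tr k b c ?j))" by (rule E_tr)
  also have "\<dots> = i" using tr_invol[OF ok(2)] tr_invol[OF ok(1)] tr_invol[OF ok(5)] by simp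
  finally have h: "tr k b c (tr k c d (tr k a c ?j)) = i" .
  have "tr k a c (tr k c d (tr k b c i)) = tr k a c (tr k c d (tr k b c (tr k b c (tr k c d (tr k a c ?j)))))"
    using h by simp
  also have "\<dots> = ?j" using tr_invol[OF ok(2)] tr_invol[OF ok(3)] tr_invol[OF ok(4)] by simp
  finally show ?thesis .
qed

end



context Eset begin

lemma dN_lt: "d - NN k < b" using r by simp

lemma E1n:
  assumes u: "u \<in> affW k" and nd: "d \<noteq> a + NN k"
  shows "(opc u b c \<and> opc (u \<circ> tr k b c) c d \<and> opc (u \<circ> tr k b c \<circ> tr k c d) a c) \<longleftrightarrow>
         (opc u b d \<and> opc (u \<circ> tr k b d) a b \<and> opc (u \<circ> tr k b d \<circ> tr k a b) b c)"
proof -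
  note ok = oks
  have ad: "d mod NN k \<noteq> a mod NN k" "a mod NN k \<noteq> d mod NN k" using clad nd by auto
  have dNe: "d - NN k = d - 1 * NN k" by simp
  have V1: "u (tr k b c i) = u i" if "c < i" "i < d" for i
  proof -
    have "i mod NN k \<noteq> b mod NN k" using ncl[of b i k] that r by simp
    moreover have "i mod NN k \<noteq> c mod NN k" using ncl[of c i k] that r by simp
    ultimately show ?thesis using tr_O by simp
  qed
  have v1c: "u (tr k b c c) = u b" using tr_b[OF ok(2)] by simp
  have v1d: "u (tr k b c d) = u d" using tr_O[OF cls(9) cls(10)] by simp
  have tcda: "tr k c d a = a" using tr_O[OF cls(2) ad(2)] .
  have V2a: "u (tr k b c (tr k c d a)) = u a" using tcda tr_O[OF cls(1) cls(2)] by simp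
  have V2c: "u (tr k b c (tr k c d c)) = u d" using tr_a[OF ok(3)] v1d by simp
  have V2b: "u (tr k b c (tr k c d b)) = u c" using tr_O[OF cls(3) cls(4)] tr_a[OF ok(2)] by simp
  have V2N: "u (tr k b c (tr k c d (d - NN k))) = u b - NN k"
    unfolding dNe trB_m[OF ok(3)] trB_m[OF ok(2)] using affW_perm'[OF u, of b 1] by simp
  have V2: "u (tr k b c (tr k c d i)) = u i" if "a < i" "i < c" "i \<noteq> b" "i \<noteq> d - NN k" for i
  proof -
    have "i mod NN k \<noteq> c mod NN k" using ncl[of i c k] that r by simp
    moreover have "i mod NN k \<noteq> d mod NN k" using cls_pinm[of i k d] that r by auto
    ultimately have 1: "tr k c d i = i" using tr_O by simp
    have "i mod NN k \<noteq> b mod NN k" using cls_pin0[of i k b] that r by auto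
    then have "tr k b c i = i" using tr_O \<open>i mod NN k \<noteq> c mod NN k\<close> by simp
    then show ?thesis using 1 by simp
  qed
  have W1a: "u (tr k b d a) = u a" using tr_O[OF cls(1) ad(2)] by simp
  have W1b: "u (tr k b d b) = u d" using tr_a[OF ok(5)] by simp
  have W1N: "u (tr k b d (d - NN k)) = u b - NN k"
    unfolding dNe trB_m[OF ok(5)] using affW_perm'[OF u, of b 1] by simp
  have W1: "u (tr k b d i) = u i" if "a < i" "i < b" "i \<noteq> d - NN k" for i
  proof -
    have "i mod NN k \<noteq> b mod NN k" using ncl[of i b k] that r by simp
    moreover have "i mod NN k \<noteq> d mod NN k" using cls_pinm[of i k d] that r by auto
    ultimately show ?thesis using tr_O by simp
  qed
  have W2b: "u (tr k b d (tr k a b b)) = u a" using tr_b[OF ok(1)] W1a by simp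
  have W2c: "u (tr k b d (tr k a b c)) = u c" using tr_O[OF cls(7) cls(8)] tr_O[OF cls(8) cls(5)] by simp
  have W2: "u (tr k b d (tr k a b i)) = u i" if "b < i" "i < c" for i
  proof -
    have "i mod NN k \<noteq> a mod NN k" using ncl[of a i k] that r by simp
    moreover have "i mod NN k \<noteq> b mod NN k" using ncl[of b i k] that r by simp
    moreover have "i mod NN k \<noteq> d mod NN k" using ncl[of i d k] that r by simp
    ultimately show ?thesis using tr_O by simp
  qed
  have L2: "opc (u \<circ> tr k b c) c d \<longleftrightarrow> u b \<le> 0 \<and> 0 < u d \<and> (\<forall>i. c < i \<and> i < d \<longrightarrow> u i < u b \<or> u d < u i)"
    unfolding opc_def NB_def comp_apply v1c v1d using V1 by auto
  have L3: "opc (u \<circ> tr k b c \<circ> tr k c d) a c \<longleftrightarrow> u a \<le> 0 \<and> 0 < u d \<and> (u c < u a \<or> u d < u c) \<and>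
      (a < d - NN k \<longrightarrow> u b - NN k < u a \<or> u d < u b - NN k) \<and>
      (\<forall>i. a < i \<and> i < c \<and> i \<noteq> b \<and> i \<noteq> d - NN k \<longrightarrow> u i < u a \<or> u d < u i)"
  proof -
    have "NB (u \<circ> tr k b c \<circ> tr k c d) a c \<longleftrightarrow> (u c < u a \<or> u d < u c) \<and>
      (a < d - NN k \<longrightarrow> u b - NN k < u a \<or> u d < u b - NN k) \<and>
      (\<forall>i. a < i \<and> i < c \<and> i \<noteq> b \<and> i \<noteq> d - NN k \<longrightarrow> u i < u a \<or> u d < u i)" (is "?N \<longleftrightarrow> ?R")
    proof
      assume h: ?N
      have h': "u (tr k b c (tr k c d i)) < u a \<or> u d < u (tr k b c (tr k c d i))" if "a < i" "i < c" for i
        using h that unfolding NB_def comp_apply V2a V2c by blast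
      show ?R
      proof (intro conjI allI impI)
        show "u c < u a \<or> u d < u c" using h'[of b] V2b r by simp
        assume "a < d - NN k"
        then show "u b - NN k < u a \<or> u d < u b - NN k" using h'[of "d - NN k"] V2N dN_lt r by simp
      next
        fix i assume i: "a < i \<and> i < c \<and> i \<noteq> b \<and> i \<noteq> d - NN k"
        then have "u (tr k b c (tr k c d i)) = u i" using V2 by simp
        then show "u i < u a \<or> u d < u i" using h'[of i] i by simp
      qed
    next
      assume h: ?R
      show ?N unfolding NB_def comp_apply V2a V2c
      proof (intro allI impI)
        fix i assume i: "a < i \<and> i < c"
        show "u (tr k b c (tr k c d i)) < u a \<or> u d < u (tr k b c (tr k c d i))"
        proof (cases "i = b")
          case True then show ?thesis using h V2b by simp
        next
          case F1: False
          show ?thesis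
          proof (cases "i = d - NN k")
            case True then show ?thesis using h V2N i by simp
          next
            case False then show ?thesis using h V2 i F1 by simp
          qed
        qed
      qed
    qed
    then show ?thesis unfolding opc_def comp_apply V2a V2c by simp
  qed
  have R2: "opc (u \<circ> tr k b d) a b \<longleftrightarrow> u a \<le> 0 \<and> 0 < u d \<and>
      (a < d - NN k \<longrightarrow> u b - NN k < u a \<or> u d < u b - NN k) \<and>
      (\<forall>i. a < i \<and> i < b \<and> i \<noteq> d - NN k \<longrightarrow> u i < u a \<or> u d < u i)"
  proof -
    have "NB (u \<circ> tr k b d) a b \<longleftrightarrow>
      (a < d - NN k \<longrightarrow> u b - NN k < u a \<or> u d < u b - NN k) \<and>
      (\<forall>i. a < i \<and> i < b \<and> i \<noteq> d - NN k \<longrightarrow> u i < u a \<or> u d < u i)" (is "?N \<longleftrightarrow> ?R")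
    proof
      assume h: ?N
      have h': "u (tr k b d i) < u a \<or> u d < u (tr k b d i)" if "a < i" "i < b" for i
        using h that unfolding NB_def comp_apply W1a W1b by blast
      show ?R
      proof (intro conjI allI impI)
        assume "a < d - NN k"
        then show "u b - NN k < u a \<or> u d < u b - NN k" using h'[of "d - NN k"] W1N dN_lt by simp
      next
        fix i assume i: "a < i \<and> i < b \<and> i \<noteq> d - NN k"
        then have "u (tr k b d i) = u i" using W1 by simp
        then show "u i < u a \<or> u d < u i" using h'[of i] i by simp
      qed
    next
      assume h: ?R
      show ?N unfolding NB_def comp_apply W1a W1b
      proof (intro allI impI)
        fix i assume i: "a < i \<and> i < b"
        show "u (tr k b d i) < u a \<or> u d < u (tr k b d i)"
        proof (cases "i = d - NN k")
          case True then show ?thesis using h W1N i by simp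
        next
          case False then show ?thesis using h W1 i by simp
        qed
      qed
    qed
    then show ?thesis unfolding opc_def comp_apply W1a W1b by simp
  qed
  have R3: "opc (u \<circ> tr k b d \<circ> tr k a b) b c \<longleftrightarrow> u a \<le> 0 \<and> 0 < u c \<and> (\<forall>i. b < i \<and> i < c \<longrightarrow> u i < u a \<or> u c < u i)"
    unfolding opc_def NB_def comp_apply W2b W2c using W2 by auto
  have L1: "opc u b c \<longleftrightarrow> u b \<le> 0 \<and> 0 < u c \<and> (\<forall>i. b < i \<and> i < c \<longrightarrow> u i < u b \<or> u c < u i)"
    unfolding opc_def NB_def by simp
  have R1: "opc u b d \<longleftrightarrow> u b \<le> 0 \<and> 0 < u d \<and> (\<forall>i. b < i \<and> i < d \<longrightarrow> u i < u b \<or> u d < u i)"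
    unfolding opc_def NB_def by simp
  show ?thesis unfolding L1 L2 L3 R1 R2 R3
  proof (rule iffI)
    assume h: "(u b \<le> 0 \<and> 0 < u c \<and> (\<forall>i. b < i \<and> i < c \<longrightarrow> u i < u b \<or> u c < u i)) \<and>
      (u b \<le> 0 \<and> 0 < u d \<and> (\<forall>i. c < i \<and> i < d \<longrightarrow> u i < u b \<or> u d < u i)) \<and>
      (u a \<le> 0 \<and> 0 < u d \<and> (u c < u a \<or> u d < u c) \<and>
      (a < d - NN k \<longrightarrow> u b - NN k < u a \<or> u d < u b - NN k) \<and>
      (\<forall>i. a < i \<and> i < c \<and> i \<noteq> b \<and> i \<noteq> d - NN k \<longrightarrow> u i < u a \<or> u d < u i))"
    have dc: "u d < u c" using h by auto
    have r1: "u b \<le> 0 \<and> 0 < u d \<and> (\<forall>i. b < i \<and> i < d \<longrightarrow> u i < u b \<or> u d < u i)" (is ?R1)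
    proof (intro conjI allI impI)
      fix i assume i: "b < i \<and> i < d"
      show "u i < u b \<or> u d < u i"
      proof (cases "i < c")
        case True
        have "u i < u b \<or> u c < u i" using h i True by auto
        then show ?thesis using dc by auto
      next
        case False
        show ?thesis
        proof (cases "i = c")
          case True then show ?thesis using dc by simp
        next
          case F2: False then show ?thesis using h i False by auto
        qed
      qed
    qed (use h in auto)
    have r2: "u a \<le> 0 \<and> 0 < u d \<and> (a < d - NN k \<longrightarrow> u b - NN k < u a \<or> u d < u b - NN k) \<and>
      (\<forall>i. a < i \<and> i < b \<and> i \<noteq> d - NN k \<longrightarrow> u i < u a \<or> u d < u i)" (is ?R2)
      using h r by auto
    have r3: "u a \<le> 0 \<and> 0 < u c \<and> (\<forall>i. b < i \<and> i < c \<longrightarrow> u i < u a \<or> u c < u i)" (is ?R3)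
    proof (intro conjI allI impI)
      fix i assume i: "b < i \<and> i < c"
      have "i \<noteq> d - NN k" using i dN_lt by auto
      then have "u i < u a \<or> u d < u i" using h i r by auto
      moreover have "u i < u b \<or> u c < u i" using h i by auto
      ultimately show "u i < u a \<or> u c < u i" using h by auto
    qed (use h in auto)
    show "?R1 \<and> ?R2 \<and> ?R3" using r1 r2 r3 by blast
  next
    assume h: "(u b \<le> 0 \<and> 0 < u d \<and> (\<forall>i. b < i \<and> i < d \<longrightarrow> u i < u b \<or> u d < u i)) \<and>
      (u a \<le> 0 \<and> 0 < u d \<and> (a < d - NN k \<longrightarrow> u b - NN k < u a \<or> u d < u b - NN k) \<and>
      (\<forall>i. a < i \<and> i < b \<and> i \<noteq> d - NN k \<longrightarrow> u i < u a \<or> u d < u i)) \<and>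
      (u a \<le> 0 \<and> 0 < u c \<and> (\<forall>i. b < i \<and> i < c \<longrightarrow> u i < u a \<or> u c < u i))"
    have dc: "u d < u c" using h r by auto
    have r1: "u b \<le> 0 \<and> 0 < u c \<and> (\<forall>i. b < i \<and> i < c \<longrightarrow> u i < u b \<or> u c < u i)" (is ?R1)
    proof (intro conjI allI impI)
      fix i assume i: "b < i \<and> i < c"
      have "u i < u b \<or> u d < u i" using h i r by auto
      moreover have "u i < u a \<or> u c < u i" using h i by auto
      ultimately show "u i < u b \<or> u c < u i" using h by auto
    qed (use h in auto)
    have r2: "u b \<le> 0 \<and> 0 < u d \<and> (\<forall>i. c < i \<and> i < d \<longrightarrow> u i < u b \<or> u d < u i)" (is ?R2)
      using h r by auto
    have r3: "u a \<le> 0 \<and> 0 < u d \<and> (u c < u a \<or> u d < u c) \<and>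
      (a < d - NN k \<longrightarrow> u b - NN k < u a \<or> u d < u b - NN k) \<and>
      (\<forall>i. a < i \<and> i < c \<and> i \<noteq> b \<and> i \<noteq> d - NN k \<longrightarrow> u i < u a \<or> u d < u i)" (is ?R3)
    proof (intro conjI allI impI)
      fix i assume i: "a < i \<and> i < c \<and> i \<noteq> b \<and> i \<noteq> d - NN k"
      show "u i < u a \<or> u d < u i"
      proof (cases "i < b")
        case True then show ?thesis using h i by auto
      next
        case False
        then have ib: "b < i" using i by auto
        have "u i < u b \<or> u d < u i" using h ib i r by auto
        moreover have "u i < u a \<or> u c < u i" using h ib i by auto
        ultimately show ?thesis using h by auto
      qed
    qed (use h dc in auto)
    show "?R1 \<and> ?R2 \<and> ?R3" using r1 r2 r3 by blast
  qed
qed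

end



context Eset begin

lemma E1e:
  assumes u: "u \<in> affW k" and dd: "d = a + NN k"
  shows "(opc u b c \<and> opc (u \<circ> tr k b c) c d \<and> opc (u \<circ> tr k b c \<circ> tr k c d) a c) \<longleftrightarrow>
         (opc u b d \<and> opc (u \<circ> tr k b d) a b \<and> opc (u \<circ> tr k b d \<circ> tr k a b) b c)"
proof -
  note ok = oks
  have ad: "a mod NN k = d mod NN k" using clad dd by auto
  have V1: "u (tr k b c i) = u i" if "c < i" "i < d" for i
  proof -
    have "i mod NN k \<noteq> b mod NN k" using ncl[of b i k] that r by simp
    moreover have "i mod NN k \<noteq> c mod NN k" using ncl[of c i k] that r by simp
    ultimately show ?thesis using tr_O by simp
  qed
  have v1c: "u (tr k b c c) = u b" using tr_b[OF ok(2)] by simp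
  have v1d: "u (tr k b c d) = u d" using tr_O[OF cls(9) cls(10)] by simp
  have tcda: "tr k c d a = c - 1 * NN k" using tr_B[OF ok(3) ad] dd by simp
  have V2a: "u (tr k b c (tr k c d a)) = u b - NN k"
    unfolding tcda trB_m[OF ok(2)] using affW_perm'[OF u, of b 1] by simp
  have V2c: "u (tr k b c (tr k c d c)) = u d" using tr_a[OF ok(3)] v1d by simp
  have V2b: "u (tr k b c (tr k c d b)) = u c" using tr_O[OF cls(3) cls(4)] tr_a[OF ok(2)] by simp
  have V2: "u (tr k b c (tr k c d i)) = u i" if "a < i" "i < c" "i \<noteq> b" for i
  proof -
    have "i mod NN k \<noteq> c mod NN k" using ncl[of i c k] that r by simp
    moreover have "i mod NN k \<noteq> d mod NN k" using ncl[of a i k] that r ad by simp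
    ultimately have 1: "tr k c d i = i" using tr_O by simp
    have "i mod NN k \<noteq> b mod NN k" using cls_pin0[of i k b] that r by auto
    then have "tr k b c i = i" using tr_O \<open>i mod NN k \<noteq> c mod NN k\<close> by simp
    then show ?thesis using 1 by simp
  qed
  have tbda: "tr k b d a = b - 1 * NN k" using tr_B[OF ok(5) ad] dd by simp
  have W1a: "u (tr k b d a) = u b - NN k" unfolding tbda using affW_perm'[OF u, of b 1] by simp
  have W1b: "u (tr k b d b) = u d" using tr_a[OF ok(5)] by simp
  have W1: "u (tr k b d i) = u i" if "a < i" "i < b" for i
  proof -
    have "i mod NN k \<noteq> b mod NN k" using ncl[of i b k] that r by simp
    moreover have "i mod NN k \<noteq> d mod NN k" using ncl[of a i k] that r ad by simp
    ultimately show ?thesis using tr_O by simp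
  qed
  have W2b: "u (tr k b d (tr k a b b)) = u b - NN k" using tr_b[OF ok(1)] W1a by simp
  have W2c: "u (tr k b d (tr k a b c)) = u c" using tr_O[OF cls(7) cls(8)] tr_O[OF cls(8) cls(5)] by simp
  have W2: "u (tr k b d (tr k a b i)) = u i" if "b < i" "i < c" for i
  proof -
    have "i mod NN k \<noteq> a mod NN k" using ncl[of a i k] that r by simp
    moreover have "i mod NN k \<noteq> b mod NN k" using ncl[of b i k] that r by simp
    moreover have "i mod NN k \<noteq> d mod NN k" using ncl[of i d k] that r by simp
    ultimately show ?thesis using tr_O by simp
  qed
  have L2: "opc (u \<circ> tr k b c) c d \<longleftrightarrow> u b \<le> 0 \<and> 0 < u d \<and> (\<forall>i. c < i \<and> i < d \<longrightarrow> u i < u b \<or> u d < u i)"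
    unfolding opc_def NB_def comp_apply v1c v1d using V1 by auto
  have L3: "opc (u \<circ> tr k b c \<circ> tr k c d) a c \<longleftrightarrow> u b - NN k \<le> 0 \<and> 0 < u d \<and> (u c < u b - NN k \<or> u d < u c) \<and>
      (\<forall>i. a < i \<and> i < c \<and> i \<noteq> b \<longrightarrow> u i < u b - NN k \<or> u d < u i)"
  proof -
    have "NB (u \<circ> tr k b c \<circ> tr k c d) a c \<longleftrightarrow> (u c < u b - NN k \<or> u d < u c) \<and>
      (\<forall>i. a < i \<and> i < c \<and> i \<noteq> b \<longrightarrow> u i < u b - NN k \<or> u d < u i)" (is "?N \<longleftrightarrow> ?R")
    proof
      assume h: ?N
      have h': "u (tr k b c (tr k c d i)) < u b - NN k \<or> u d < u (tr k b c (tr k c d i))" if "a < i" "i < c" for i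
        using h that unfolding NB_def comp_apply V2a V2c by blast
      show ?R
      proof (intro conjI allI impI)
        show "u c < u b - NN k \<or> u d < u c" using h'[of b] V2b r by simp
      next
        fix i assume i: "a < i \<and> i < c \<and> i \<noteq> b"
        then have "u (tr k b c (tr k c d i)) = u i" using V2 by simp
        then show "u i < u b - NN k \<or> u d < u i" using h'[of i] i by simp
      qed
    next
      assume h: ?R
      show ?N unfolding NB_def comp_apply V2a V2c
      proof (intro allI impI)
        fix i assume i: "a < i \<and> i < c"
        show "u (tr k b c (tr k c d i)) < u b - NN k \<or> u d < u (tr k b c (tr k c d i))"
        proof (cases "i = b")
          case True then show ?thesis using h V2b by simp
        next
          case False then show ?thesis using h V2 i by simp
        qed
      qed
    qed
    then show ?thesis unfolding opc_def comp_apply V2a V2c by simp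
  qed
  have R2: "opc (u \<circ> tr k b d) a b \<longleftrightarrow> u b - NN k \<le> 0 \<and> 0 < u d \<and>
      (\<forall>i. a < i \<and> i < b \<longrightarrow> u i < u b - NN k \<or> u d < u i)"
    unfolding opc_def NB_def comp_apply W1a W1b using W1 by auto
  have R3: "opc (u \<circ> tr k b d \<circ> tr k a b) b c \<longleftrightarrow> u b - NN k \<le> 0 \<and> 0 < u c \<and> (\<forall>i. b < i \<and> i < c \<longrightarrow> u i < u b - NN k \<or> u c < u i)"
    unfolding opc_def NB_def comp_apply W2b W2c using W2 by auto
  have L1: "opc u b c \<longleftrightarrow> u b \<le> 0 \<and> 0 < u c \<and> (\<forall>i. b < i \<and> i < c \<longrightarrow> u i < u b \<or> u c < u i)"
    unfolding opc_def NB_def by simp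
  have R1: "opc u b d \<longleftrightarrow> u b \<le> 0 \<and> 0 < u d \<and> (\<forall>i. b < i \<and> i < d \<longrightarrow> u i < u b \<or> u d < u i)"
    unfolding opc_def NB_def by simp
  have N0: "NN k > 0" by simp
  show ?thesis unfolding L1 L2 L3 R1 R2 R3
  proof (rule iffI)
    assume h: "(u b \<le> 0 \<and> 0 < u c \<and> (\<forall>i. b < i \<and> i < c \<longrightarrow> u i < u b \<or> u c < u i)) \<and>
      (u b \<le> 0 \<and> 0 < u d \<and> (\<forall>i. c < i \<and> i < d \<longrightarrow> u i < u b \<or> u d < u i)) \<and>
      (u b - NN k \<le> 0 \<and> 0 < u d \<and> (u c < u b - NN k \<or> u d < u c) \<and>
      (\<forall>i. a < i \<and> i < c \<and> i \<noteq> b \<longrightarrow> u i < u b - NN k \<or> u d < u i))"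
    have dc: "u d < u c" using h N0 by auto
    have r1: "u b \<le> 0 \<and> 0 < u d \<and> (\<forall>i. b < i \<and> i < d \<longrightarrow> u i < u b \<or> u d < u i)" (is ?R1)
    proof (intro conjI allI impI)
      fix i assume i: "b < i \<and> i < d"
      show "u i < u b \<or> u d < u i"
      proof (cases "i < c")
        case True
        have "u i < u b \<or> u c < u i" using h i True by auto
        then show ?thesis using dc by auto
      next
        case False
        show ?thesis
        proof (cases "i = c")
          case True then show ?thesis using dc by simp
        next
          case F2: False then show ?thesis using h i False by auto
        qed
      qed
    qed (use h in auto)
    have r2: "u b - NN k \<le> 0 \<and> 0 < u d \<and> (\<forall>i. a < i \<and> i < b \<longrightarrow> u i < u b - NN k \<or> u d < u i)" (is ?R2)
      using h r by auto
    have r3: "u b - NN k \<le> 0 \<and> 0 < u c \<and> (\<forall>i. b < i \<and> i < c \<longrightarrow> u i < u b - NN k \<or> u c < u i)" (is ?R3)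
    proof (intro conjI allI impI)
      fix i assume i: "b < i \<and> i < c"
      have "u i < u b - NN k \<or> u d < u i" using h i r by auto
      moreover have "u i < u b \<or> u c < u i" using h i by auto
      ultimately show "u i < u b - NN k \<or> u c < u i" using h by auto
    qed (use h in auto)
    show "?R1 \<and> ?R2 \<and> ?R3" using r1 r2 r3 by blast
  next
    assume h: "(u b \<le> 0 \<and> 0 < u d \<and> (\<forall>i. b < i \<and> i < d \<longrightarrow> u i < u b \<or> u d < u i)) \<and>
      (u b - NN k \<le> 0 \<and> 0 < u d \<and> (\<forall>i. a < i \<and> i < b \<longrightarrow> u i < u b - NN k \<or> u d < u i)) \<and>
      (u b - NN k \<le> 0 \<and> 0 < u c \<and> (\<forall>i. b < i \<and> i < c \<longrightarrow> u i < u b - NN k \<or> u c < u i))"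
    have dc: "u d < u c" using h r by auto
    have r1: "u b \<le> 0 \<and> 0 < u c \<and> (\<forall>i. b < i \<and> i < c \<longrightarrow> u i < u b \<or> u c < u i)" (is ?R1)
    proof (intro conjI allI impI)
      fix i assume i: "b < i \<and> i < c"
      have "u i < u b \<or> u d < u i" using h i r by auto
      moreover have "u i < u b - NN k \<or> u c < u i" using h i by auto
      ultimately show "u i < u b \<or> u c < u i" using h N0 by auto
    qed (use h in auto)
    have r2: "u b \<le> 0 \<and> 0 < u d \<and> (\<forall>i. c < i \<and> i < d \<longrightarrow> u i < u b \<or> u d < u i)" (is ?R2)
      using h r by auto
    have r3: "u b - NN k \<le> 0 \<and> 0 < u d \<and> (u c < u b - NN k \<or> u d < u c) \<and>
      (\<forall>i. a < i \<and> i < c \<and> i \<noteq> b \<longrightarrow> u i < u b - NN k \<or> u d < u i)" (is ?R3)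
    proof (intro conjI allI impI)
      fix i assume i: "a < i \<and> i < c \<and> i \<noteq> b"
      show "u i < u b - NN k \<or> u d < u i"
      proof (cases "i < b")
        case True then show ?thesis using h i by auto
      next
        case False
        then have ib: "b < i" using i by auto
        have "u i < u b \<or> u d < u i" using h ib i r by auto
        moreover have "u i < u b - NN k \<or> u c < u i" using h ib i by auto
        ultimately show ?thesis using h by auto
      qed
    qed (use h dc in auto)
    show "?R1 \<and> ?R2 \<and> ?R3" using r1 r2 r3 by blast
  qed
qed

end



context Eset begin

lemma E2n:
  assumes u: "u \<in> affW k" and nd: "d \<noteq> a + NN k"
  shows "(opc u a c \<and> opc (u \<circ> tr k a c) c d \<and> opc (u \<circ> tr k a c \<circ> tr k c d) b c) \<longleftrightarrow>
         (opc u b c \<and> opc (u \<circ> tr k b c) a b \<and> opc (u \<circ> tr k b c \<circ> tr k a b) b d)"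
proof -
  note ok = oks
  have ad: "d mod NN k \<noteq> a mod NN k" "a mod NN k \<noteq> d mod NN k" using clad nd by auto
  have aN: "c < a + NN k" using r by simp
  have v1c: "u (tr k a c c) = u a" using tr_b[OF ok(4)] by simp
  have v1d: "u (tr k a c d) = u d" using tr_O[OF ad(1) cls(10)] by simp
  have V1N: "u (tr k a c (a + NN k)) = u c + NN k" using trA_p[of k a c 1] affW_perm[OF u, of c 1] by simp
  have V1: "u (tr k a c i) = u i" if "c < i" "i < d" "i \<noteq> a + NN k" for i
  proof -
    have "i mod NN k \<noteq> a mod NN k" using cls_pinp[of i k a] that r by auto
    moreover have "i mod NN k \<noteq> c mod NN k" using ncl[of c i k] that r by simp
    ultimately show ?thesis using tr_O by simp
  qed
  have V2b: "u (tr k a c (tr k c d b)) = u b" using tr_O[OF cls(3) cls(4)] tr_O[OF cls(6) cls(3)] by simp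
  have V2c: "u (tr k a c (tr k c d c)) = u d" using tr_a[OF ok(3)] v1d by simp
  have V2: "u (tr k a c (tr k c d i)) = u i" if "b < i" "i < c" for i
  proof -
    have 1: "i mod NN k \<noteq> c mod NN k" using ncl[of i c k] that r by simp
    moreover have "i mod NN k \<noteq> d mod NN k" using ncl[of i d k] that r by simp
    ultimately have "tr k c d i = i" using tr_O by simp
    moreover have "i mod NN k \<noteq> a mod NN k" using ncl[of a i k] that r by simp
    ultimately show ?thesis using tr_O 1 by simp
  qed
  have W1a: "u (tr k b c a) = u a" using tr_O[OF cls(1) cls(2)] by simp
  have W1b: "u (tr k b c b) = u c" using tr_a[OF ok(2)] by simp
  have W1: "u (tr k b c i) = u i" if "a < i" "i < b" for i
  proof -
    have "i mod NN k \<noteq> b mod NN k" using ncl[of i b k] that r by simp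
    moreover have "i mod NN k \<noteq> c mod NN k" using ncl[of i c k] that r by simp
    ultimately show ?thesis using tr_O by simp
  qed
  have W2b: "u (tr k b c (tr k a b b)) = u a" using tr_b[OF ok(1)] W1a by simp
  have W2d: "u (tr k b c (tr k a b d)) = u d" using tr_O[OF ad(1) cls(9)] tr_O[OF cls(9) cls(10)] by simp
  have W2c: "u (tr k b c (tr k a b c)) = u b" using tr_O[OF cls(7) cls(8)] tr_b[OF ok(2)] by simp
  have W2N: "u (tr k b c (tr k a b (a + NN k))) = u c + NN k"
    using trA_p[of k a b 1] trA_p[of k b c 1] affW_perm[OF u, of c 1] by simp
  have W2: "u (tr k b c (tr k a b i)) = u i" if "b < i" "i < d" "i \<noteq> c" "i \<noteq> a + NN k" for i
  proof -
    have "i mod NN k \<noteq> a mod NN k" using cls_pinp[of i k a] that r by auto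
    moreover have "i mod NN k \<noteq> b mod NN k" using ncl[of b i k] that r by simp
    ultimately have 1: "tr k a b i = i" using tr_O by simp
    have "i mod NN k \<noteq> c mod NN k" using cls_pin0[of i k c] that r by auto
    then have "tr k b c i = i" using tr_O \<open>i mod NN k \<noteq> b mod NN k\<close> by simp
    then show ?thesis using 1 by simp
  qed
  have L1: "opc u a c \<longleftrightarrow> u a \<le> 0 \<and> 0 < u c \<and> (\<forall>i. a < i \<and> i < c \<longrightarrow> u i < u a \<or> u c < u i)"
    unfolding opc_def NB_def by simp
  have L2: "opc (u \<circ> tr k a c) c d \<longleftrightarrow> u a \<le> 0 \<and> 0 < u d \<and>
      (a + NN k < d \<longrightarrow> u c + NN k < u a \<or> u d < u c + NN k) \<and>
      (\<forall>i. c < i \<and> i < d \<and> i \<noteq> a + NN k \<longrightarrow> u i < u a \<or> u d < u i)"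
  proof -
    have "NB (u \<circ> tr k a c) c d \<longleftrightarrow>
      (a + NN k < d \<longrightarrow> u c + NN k < u a \<or> u d < u c + NN k) \<and>
      (\<forall>i. c < i \<and> i < d \<and> i \<noteq> a + NN k \<longrightarrow> u i < u a \<or> u d < u i)" (is "?N \<longleftrightarrow> ?R")
    proof
      assume h: ?N
      have h': "u (tr k a c i) < u a \<or> u d < u (tr k a c i)" if "c < i" "i < d" for i
        using h that unfolding NB_def comp_apply v1c v1d by blast
      show ?R
      proof (intro conjI allI impI)
        assume "a + NN k < d"
        then show "u c + NN k < u a \<or> u d < u c + NN k" using h'[of "a + NN k"] V1N aN by simp
      next
        fix i assume i: "c < i \<and> i < d \<and> i \<noteq> a + NN k"
        then have "u (tr k a c i) = u i" using V1 by simp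
        then show "u i < u a \<or> u d < u i" using h'[of i] i by simp
      qed
    next
      assume h: ?R
      show ?N unfolding NB_def comp_apply v1c v1d
      proof (intro allI impI)
        fix i assume i: "c < i \<and> i < d"
        show "u (tr k a c i) < u a \<or> u d < u (tr k a c i)"
        proof (cases "i = a + NN k")
          case True then show ?thesis using h V1N i by simp
        next
          case False then show ?thesis using h V1 i by simp
        qed
      qed
    qed
    then show ?thesis unfolding opc_def comp_apply v1c v1d by simp
  qed
  have L3: "opc (u \<circ> tr k a c \<circ> tr k c d) b c \<longleftrightarrow> u b \<le> 0 \<and> 0 < u d \<and> (\<forall>i. b < i \<and> i < c \<longrightarrow> u i < u b \<or> u d < u i)"
    unfolding opc_def NB_def comp_apply V2b V2c using V2 by auto
  have R1: "opc u b c \<longleftrightarrow> u b \<le> 0 \<and> 0 < u c \<and> (\<forall>i. b < i \<and> i < c \<longrightarrow> u i < u b \<or> u c < u i)"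
    unfolding opc_def NB_def by simp
  have R2: "opc (u \<circ> tr k b c) a b \<longleftrightarrow> u a \<le> 0 \<and> 0 < u c \<and> (\<forall>i. a < i \<and> i < b \<longrightarrow> u i < u a \<or> u c < u i)"
    unfolding opc_def NB_def comp_apply W1a W1b using W1 by auto
  have R3: "opc (u \<circ> tr k b c \<circ> tr k a b) b d \<longleftrightarrow> u a \<le> 0 \<and> 0 < u d \<and> (u b < u a \<or> u d < u b) \<and>
      (a + NN k < d \<longrightarrow> u c + NN k < u a \<or> u d < u c + NN k) \<and>
      (\<forall>i. b < i \<and> i < d \<and> i \<noteq> c \<and> i \<noteq> a + NN k \<longrightarrow> u i < u a \<or> u d < u i)"
  proof -
    have "NB (u \<circ> tr k b c \<circ> tr k a b) b d \<longleftrightarrow> (u b < u a \<or> u d < u b) \<and>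
      (a + NN k < d \<longrightarrow> u c + NN k < u a \<or> u d < u c + NN k) \<and>
      (\<forall>i. b < i \<and> i < d \<and> i \<noteq> c \<and> i \<noteq> a + NN k \<longrightarrow> u i < u a \<or> u d < u i)" (is "?N \<longleftrightarrow> ?R")
    proof
      assume h: ?N
      have h': "u (tr k b c (tr k a b i)) < u a \<or> u d < u (tr k b c (tr k a b i))" if "b < i" "i < d" for i
        using h that unfolding NB_def comp_apply W2b W2d by blast
      show ?R
      proof (intro conjI allI impI)
        show "u b < u a \<or> u d < u b" using h'[of c] W2c r by simp
        assume "a + NN k < d"
        then show "u c + NN k < u a \<or> u d < u c + NN k" using h'[of "a + NN k"] W2N aN r by simp
      next
        fix i assume i: "b < i \<and> i < d \<and> i \<noteq> c \<and> i \<noteq> a + NN k"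
        then have "u (tr k b c (tr k a b i)) = u i" using W2 by simp
        then show "u i < u a \<or> u d < u i" using h'[of i] i by simp
      qed
    next
      assume h: ?R
      show ?N unfolding NB_def comp_apply W2b W2d
      proof (intro allI impI)
        fix i assume i: "b < i \<and> i < d"
        show "u (tr k b c (tr k a b i)) < u a \<or> u d < u (tr k b c (tr k a b i))"
        proof (cases "i = c")
          case True then show ?thesis using h W2c by simp
        next
          case F1: False
          show ?thesis
          proof (cases "i = a + NN k")
            case True then show ?thesis using h W2N i by simp
          next
            case False then show ?thesis using h W2 i F1 by simp
          qed
        qed
      qed
    qed
    then show ?thesis unfolding opc_def comp_apply W2b W2d by simp
  qed
  show ?thesis unfolding L1 L2 L3 R1 R2 R3
  proof (rule iffI)
    assume h: "(u a \<le> 0 \<and> 0 < u c \<and> (\<forall>i. a < i \<and> i < c \<longrightarrow> u i < u a \<or> u c < u i)) \<and>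
      (u a \<le> 0 \<and> 0 < u d \<and> (a + NN k < d \<longrightarrow> u c + NN k < u a \<or> u d < u c + NN k) \<and>
      (\<forall>i. c < i \<and> i < d \<and> i \<noteq> a + NN k \<longrightarrow> u i < u a \<or> u d < u i)) \<and>
      (u b \<le> 0 \<and> 0 < u d \<and> (\<forall>i. b < i \<and> i < c \<longrightarrow> u i < u b \<or> u d < u i))"
    have ba: "u b < u a" using h r by auto
    have r1: "u b \<le> 0 \<and> 0 < u c \<and> (\<forall>i. b < i \<and> i < c \<longrightarrow> u i < u b \<or> u c < u i)" (is ?R1)
    proof (intro conjI allI impI)
      fix i assume i: "b < i \<and> i < c"
      have "u i < u a \<or> u c < u i" using h i r by auto
      moreover have "u i < u b \<or> u d < u i" using h i by auto
      ultimately show "u i < u b \<or> u c < u i" using h by auto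
    qed (use h in auto)
    have r2: "u a \<le> 0 \<and> 0 < u c \<and> (\<forall>i. a < i \<and> i < b \<longrightarrow> u i < u a \<or> u c < u i)" (is ?R2)
      using h r by auto
    have r3: "u a \<le> 0 \<and> 0 < u d \<and> (u b < u a \<or> u d < u b) \<and>
      (a + NN k < d \<longrightarrow> u c + NN k < u a \<or> u d < u c + NN k) \<and>
      (\<forall>i. b < i \<and> i < d \<and> i \<noteq> c \<and> i \<noteq> a + NN k \<longrightarrow> u i < u a \<or> u d < u i)" (is ?R3)
    proof (intro conjI allI impI)
      fix i assume i: "b < i \<and> i < d \<and> i \<noteq> c \<and> i \<noteq> a + NN k"
      show "u i < u a \<or> u d < u i"
      proof (cases "i < c")
        case True
        have "u i < u a \<or> u c < u i" using h i True r by auto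
        moreover have "u i < u b \<or> u d < u i" using h i True by auto
        ultimately show ?thesis using h by auto
      next
        case False then show ?thesis using h i by auto
      qed
    qed (use h ba in auto)
    show "?R1 \<and> ?R2 \<and> ?R3" using r1 r2 r3 by blast
  next
    assume h: "(u b \<le> 0 \<and> 0 < u c \<and> (\<forall>i. b < i \<and> i < c \<longrightarrow> u i < u b \<or> u c < u i)) \<and>
      (u a \<le> 0 \<and> 0 < u c \<and> (\<forall>i. a < i \<and> i < b \<longrightarrow> u i < u a \<or> u c < u i)) \<and>
      (u a \<le> 0 \<and> 0 < u d \<and> (u b < u a \<or> u d < u b) \<and>
      (a + NN k < d \<longrightarrow> u c + NN k < u a \<or> u d < u c + NN k) \<and>
      (\<forall>i. b < i \<and> i < d \<and> i \<noteq> c \<and> i \<noteq> a + NN k \<longrightarrow> u i < u a \<or> u d < u i))"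
    have ba: "u b < u a" using h by auto
    have r1: "u a \<le> 0 \<and> 0 < u c \<and> (\<forall>i. a < i \<and> i < c \<longrightarrow> u i < u a \<or> u c < u i)" (is ?R1)
    proof (intro conjI allI impI)
      fix i assume i: "a < i \<and> i < c"
      show "u i < u a \<or> u c < u i"
      proof (cases "i < b")
        case True then show ?thesis using h i by auto
      next
        case False
        show ?thesis
        proof (cases "i = b")
          case True then show ?thesis using ba by simp
        next
          case F2: False
          then have "u i < u b \<or> u c < u i" using h i False by auto
          then show ?thesis using ba by auto
        qed
      qed
    qed (use h in auto)
    have r2: "u a \<le> 0 \<and> 0 < u d \<and> (a + NN k < d \<longrightarrow> u c + NN k < u a \<or> u d < u c + NN k) \<and>
      (\<forall>i. c < i \<and> i < d \<and> i \<noteq> a + NN k \<longrightarrow> u i < u a \<or> u d < u i)" (is ?R2)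
      using h r by auto
    have r3: "u b \<le> 0 \<and> 0 < u d \<and> (\<forall>i. b < i \<and> i < c \<longrightarrow> u i < u b \<or> u d < u i)" (is ?R3)
    proof (intro conjI allI impI)
      fix i assume i: "b < i \<and> i < c"
      have "i \<noteq> a + NN k" using i aN by auto
      then have "u i < u a \<or> u d < u i" using h i r by auto
      moreover have "u i < u b \<or> u c < u i" using h i by auto
      ultimately show "u i < u b \<or> u d < u i" using h by auto
    qed (use h in auto)
    show "?R1 \<and> ?R2 \<and> ?R3" using r1 r2 r3 by blast
  qed
qed

lemma E2e:
  assumes u: "u \<in> affW k" and dd: "d = a + NN k"
  shows "(opc u a c \<and> opc (u \<circ> tr k a c) c d \<and> opc (u \<circ> tr k a c \<circ> tr k c d) b c) \<longleftrightarrow>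
         (opc u b c \<and> opc (u \<circ> tr k b c) a b \<and> opc (u \<circ> tr k b c \<circ> tr k a b) b d)"
proof -
  note ok = oks
  have ad: "d mod NN k = a mod NN k" using clad dd by auto
  have N0: "NN k > 0" by simp
  have v1c: "u (tr k a c c) = u a" using tr_b[OF ok(4)] by simp
  have v1d: "u (tr k a c d) = u c + NN k"
    unfolding dd using trA_p[of k a c 1] affW_perm[OF u, of c 1] by simp
  have V1: "u (tr k a c i) = u i" if "c < i" "i < d" for i
  proof -
    have "i mod NN k \<noteq> a mod NN k" using ncl[of a i k] that r dd by simp
    moreover have "i mod NN k \<noteq> c mod NN k" using ncl[of c i k] that r by simp
    ultimately show ?thesis using tr_O by simp
  qed
  have V2b: "u (tr k a c (tr k c d b)) = u b" using tr_O[OF cls(3) cls(4)] tr_O[OF cls(6) cls(3)] by simp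
  have V2c: "u (tr k a c (tr k c d c)) = u c + NN k" using tr_a[OF ok(3)] v1d by simp
  have V2: "u (tr k a c (tr k c d i)) = u i" if "b < i" "i < c" for i
  proof -
    have 1: "i mod NN k \<noteq> c mod NN k" using ncl[of i c k] that r by simp
    moreover have "i mod NN k \<noteq> d mod NN k" using ncl[of i d k] that r by simp
    ultimately have "tr k c d i = i" using tr_O by simp
    moreover have "i mod NN k \<noteq> a mod NN k" using ncl[of a i k] that r by simp
    ultimately show ?thesis using tr_O 1 by simp
  qed
  have W1a: "u (tr k b c a) = u a" using tr_O[OF cls(1) cls(2)] by simp
  have W1b: "u (tr k b c b) = u c" using tr_a[OF ok(2)] by simp
  have W1: "u (tr k b c i) = u i" if "a < i" "i < b" for i
  proof -
    have "i mod NN k \<noteq> b mod NN k" using ncl[of i b k] that r by simp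
    moreover have "i mod NN k \<noteq> c mod NN k" using ncl[of i c k] that r by simp
    ultimately show ?thesis using tr_O by simp
  qed
  have W2b: "u (tr k b c (tr k a b b)) = u a" using tr_b[OF ok(1)] W1a by simp
  have W2d: "u (tr k b c (tr k a b d)) = u c + NN k"
    unfolding dd using trA_p[of k a b 1] trA_p[of k b c 1] affW_perm[OF u, of c 1] by simp
  have W2c: "u (tr k b c (tr k a b c)) = u b" using tr_O[OF cls(7) cls(8)] tr_b[OF ok(2)] by simp
  have W2: "u (tr k b c (tr k a b i)) = u i" if "b < i" "i < d" "i \<noteq> c" for i
  proof -
    have "i mod NN k \<noteq> a mod NN k" using ncl[of a i k] that r dd by simp
    moreover have "i mod NN k \<noteq> b mod NN k" using ncl[of b i k] that r by simp
    ultimately have 1: "tr k a b i = i" using tr_O by simp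
    have "i mod NN k \<noteq> c mod NN k" using cls_pin0[of i k c] that r by auto
    then have "tr k b c i = i" using tr_O \<open>i mod NN k \<noteq> b mod NN k\<close> by simp
    then show ?thesis using 1 by simp
  qed
  have L1: "opc u a c \<longleftrightarrow> u a \<le> 0 \<and> 0 < u c \<and> (\<forall>i. a < i \<and> i < c \<longrightarrow> u i < u a \<or> u c < u i)"
    unfolding opc_def NB_def by simp
  have L2: "opc (u \<circ> tr k a c) c d \<longleftrightarrow> u a \<le> 0 \<and> 0 < u c + NN k \<and>
      (\<forall>i. c < i \<and> i < d \<longrightarrow> u i < u a \<or> u c + NN k < u i)"
    unfolding opc_def NB_def comp_apply v1c v1d using V1 by auto
  have L3: "opc (u \<circ> tr k a c \<circ> tr k c d) b c \<longleftrightarrow> u b \<le> 0 \<and> 0 < u c + NN k \<and> (\<forall>i. b < i \<and> i < c \<longrightarrow> u i < u b \<or> u c + NN k < u i)"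
    unfolding opc_def NB_def comp_apply V2b V2c using V2 by auto
  have R1: "opc u b c \<longleftrightarrow> u b \<le> 0 \<and> 0 < u c \<and> (\<forall>i. b < i \<and> i < c \<longrightarrow> u i < u b \<or> u c < u i)"
    unfolding opc_def NB_def by simp
  have R2: "opc (u \<circ> tr k b c) a b \<longleftrightarrow> u a \<le> 0 \<and> 0 < u c \<and> (\<forall>i. a < i \<and> i < b \<longrightarrow> u i < u a \<or> u c < u i)"
    unfolding opc_def NB_def comp_apply W1a W1b using W1 by auto
  have R3: "opc (u \<circ> tr k b c \<circ> tr k a b) b d \<longleftrightarrow> u a \<le> 0 \<and> 0 < u c + NN k \<and> (u b < u a \<or> u c + NN k < u b) \<and>
      (\<forall>i. b < i \<and> i < d \<and> i \<noteq> c \<longrightarrow> u i < u a \<or> u c + NN k < u i)"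
  proof -
    have "NB (u \<circ> tr k b c \<circ> tr k a b) b d \<longleftrightarrow> (u b < u a \<or> u c + NN k < u b) \<and>
      (\<forall>i. b < i \<and> i < d \<and> i \<noteq> c \<longrightarrow> u i < u a \<or> u c + NN k < u i)" (is "?N \<longleftrightarrow> ?R")
    proof
      assume h: ?N
      have h': "u (tr k b c (tr k a b i)) < u a \<or> u c + NN k < u (tr k b c (tr k a b i))" if "b < i" "i < d" for i
        using h that unfolding NB_def comp_apply W2b W2d by blast
      show ?R
      proof (intro conjI allI impI)
        show "u b < u a \<or> u c + NN k < u b" using h'[of c] W2c r by simp
      next
        fix i assume i: "b < i \<and> i < d \<and> i \<noteq> c"
        then have "u (tr k b c (tr k a b i)) = u i" using W2 by simp
        then show "u i < u a \<or> u c + NN k < u i" using h'[of i] i by simp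
      qed
    next
      assume h: ?R
      show ?N unfolding NB_def comp_apply W2b W2d
      proof (intro allI impI)
        fix i assume i: "b < i \<and> i < d"
        show "u (tr k b c (tr k a b i)) < u a \<or> u c + NN k < u (tr k b c (tr k a b i))"
        proof (cases "i = c")
          case True then show ?thesis using h W2c by simp
        next
          case False then show ?thesis using h W2 i by simp
        qed
      qed
    qed
    then show ?thesis unfolding opc_def comp_apply W2b W2d by simp
  qed
  show ?thesis unfolding L1 L2 L3 R1 R2 R3
  proof (rule iffI)
    assume h: "(u a \<le> 0 \<and> 0 < u c \<and> (\<forall>i. a < i \<and> i < c \<longrightarrow> u i < u a \<or> u c < u i)) \<and>
      (u a \<le> 0 \<and> 0 < u c + NN k \<and> (\<forall>i. c < i \<and> i < d \<longrightarrow> u i < u a \<or> u c + NN k < u i)) \<and>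
      (u b \<le> 0 \<and> 0 < u c + NN k \<and> (\<forall>i. b < i \<and> i < c \<longrightarrow> u i < u b \<or> u c + NN k < u i))"
    have ba: "u b < u a" using h r by auto
    have r1: "u b \<le> 0 \<and> 0 < u c \<and> (\<forall>i. b < i \<and> i < c \<longrightarrow> u i < u b \<or> u c < u i)" (is ?R1)
    proof (intro conjI allI impI)
      fix i assume i: "b < i \<and> i < c"
      have "u i < u a \<or> u c < u i" using h i r by auto
      moreover have "u i < u b \<or> u c + NN k < u i" using h i by auto
      ultimately show "u i < u b \<or> u c < u i" using h N0 by auto
    qed (use h in auto)
    have r2: "u a \<le> 0 \<and> 0 < u c \<and> (\<forall>i. a < i \<and> i < b \<longrightarrow> u i < u a \<or> u c < u i)" (is ?R2)
      using h r by auto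
    have r3: "u a \<le> 0 \<and> 0 < u c + NN k \<and> (u b < u a \<or> u c + NN k < u b) \<and>
      (\<forall>i. b < i \<and> i < d \<and> i \<noteq> c \<longrightarrow> u i < u a \<or> u c + NN k < u i)" (is ?R3)
    proof (intro conjI allI impI)
      fix i assume i: "b < i \<and> i < d \<and> i \<noteq> c"
      show "u i < u a \<or> u c + NN k < u i"
      proof (cases "i < c")
        case True
        have "u i < u a \<or> u c < u i" using h i True r by auto
        moreover have "u i < u b \<or> u c + NN k < u i" using h i True by auto
        ultimately show ?thesis using h by auto
      next
        case False then show ?thesis using h i by auto
      qed
    qed (use h ba in auto)
    show "?R1 \<and> ?R2 \<and> ?R3" using r1 r2 r3 by blast
  next
    assume h: "(u b \<le> 0 \<and> 0 < u c \<and> (\<forall>i. b < i \<and> i < c \<longrightarrow> u i < u b \<or> u c < u i)) \<and>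
      (u a \<le> 0 \<and> 0 < u c \<and> (\<forall>i. a < i \<and> i < b \<longrightarrow> u i < u a \<or> u c < u i)) \<and>
      (u a \<le> 0 \<and> 0 < u c + NN k \<and> (u b < u a \<or> u c + NN k < u b) \<and>
      (\<forall>i. b < i \<and> i < d \<and> i \<noteq> c \<longrightarrow> u i < u a \<or> u c + NN k < u i))"
    have ba: "u b < u a" using h N0 by auto
    have r1: "u a \<le> 0 \<and> 0 < u c \<and> (\<forall>i. a < i \<and> i < c \<longrightarrow> u i < u a \<or> u c < u i)" (is ?R1)
    proof (intro conjI allI impI)
      fix i assume i: "a < i \<and> i < c"
      show "u i < u a \<or> u c < u i"
      proof (cases "i < b")
        case True then show ?thesis using h i by auto
      next
        case False
        show ?thesis
        proof (cases "i = b")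
          case True then show ?thesis using ba by simp
        next
          case F2: False
          then have "u i < u b \<or> u c < u i" using h i False by auto
          then show ?thesis using ba by auto
        qed
      qed
    qed (use h in auto)
    have r2: "u a \<le> 0 \<and> 0 < u c + NN k \<and> (\<forall>i. c < i \<and> i < d \<longrightarrow> u i < u a \<or> u c + NN k < u i)" (is ?R2)
      using h r by auto
    have r3: "u b \<le> 0 \<and> 0 < u c + NN k \<and> (\<forall>i. b < i \<and> i < c \<longrightarrow> u i < u b \<or> u c + NN k < u i)" (is ?R3)
    proof (intro conjI allI impI)
      fix i assume i: "b < i \<and> i < c"
      have "u i < u a \<or> u c + NN k < u i" using h i r by auto
      moreover have "u i < u b \<or> u c < u i" using h i by auto
      ultimately show "u i < u b \<or> u c + NN k < u i" using h by auto
    qed (use h N0 in auto)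
    show "?R1 \<and> ?R2 \<and> ?R3" using r1 r2 r3 by blast
  qed
qed

end



context Eset begin

lemma partE1:
  assumes k: "k \<ge> 1" and u: "u \<in> affW k"
  shows "Tb k a c (Tb k c d (Tb k b c (Some u))) = Tb k b c (Tb k a b (Tb k b d (Some u)))"
proof -
  note ok = oks
  let ?v1 = "u \<circ> tr k b c" let ?v2 = "u \<circ> tr k b c \<circ> tr k c d"
  let ?w1 = "u \<circ> tr k b d" let ?w2 = "u \<circ> tr k b d \<circ> tr k a b"
  have v1W: "?v1 \<in> affW k" by (rule affW_tr[OF u ok(2)])
  have v2W: "?v2 \<in> affW k" by (rule affW_tr[OF v1W ok(3)])
  have w1W: "?w1 \<in> affW k" by (rule affW_tr[OF u ok(5)])
  have w2W: "?w2 \<in> affW k" by (rule affW_tr[OF w1W ok(1)])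
  have L: "Tb k a c (Tb k c d (Tb k b c (Some u))) =
      (if opc u b c \<and> opc ?v1 c d \<and> opc ?v2 a c then Some (?v2 \<circ> tr k a c) else None)"
    using tbas_eq[OF k u ok(2)] tbas_eq[OF k v1W ok(3)] tbas_eq[OF k v2W ok(4)] by simp
  have R: "Tb k b c (Tb k a b (Tb k b d (Some u))) =
      (if opc u b d \<and> opc ?w1 a b \<and> opc ?w2 b c then Some (?w2 \<circ> tr k b c) else None)"
    using tbas_eq[OF k u ok(5)] tbas_eq[OF k w1W ok(1)] tbas_eq[OF k w2W ok(2)] by simp
  have feq: "?v2 \<circ> tr k a c = ?w2 \<circ> tr k b c" using E_tr by (simp add: fun_eq_iff)
  have ceq: "(opc u b c \<and> opc ?v1 c d \<and> opc ?v2 a c) \<longleftrightarrow> (opc u b d \<and> opc ?w1 a b \<and> opc ?w2 b c)"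
    using E1e[OF u] E1n[OF u] by (cases "d = a + NN k") auto
  show ?thesis using L R feq ceq by simp
qed

lemma partE2:
  assumes k: "k \<ge> 1" and u: "u \<in> affW k"
  shows "Tb k b c (Tb k c d (Tb k a c (Some u))) = Tb k b d (Tb k a b (Tb k b c (Some u)))"
proof -
  note ok = oks
  let ?v1 = "u \<circ> tr k a c" let ?v2 = "u \<circ> tr k a c \<circ> tr k c d"
  let ?w1 = "u \<circ> tr k b c" let ?w2 = "u \<circ> tr k b c \<circ> tr k a b"
  have v1W: "?v1 \<in> affW k" by (rule affW_tr[OF u ok(4)])
  have v2W: "?v2 \<in> affW k" by (rule affW_tr[OF v1W ok(3)])
  have w1W: "?w1 \<in> affW k" by (rule affW_tr[OF u ok(2)])
  have w2W: "?w2 \<in> affW k" by (rule affW_tr[OF w1W ok(1)])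
  have L: "Tb k b c (Tb k c d (Tb k a c (Some u))) =
      (if opc u a c \<and> opc ?v1 c d \<and> opc ?v2 b c then Some (?v2 \<circ> tr k b c) else None)"
    using tbas_eq[OF k u ok(4)] tbas_eq[OF k v1W ok(3)] tbas_eq[OF k v2W ok(2)] by simp
  have R: "Tb k b d (Tb k a b (Tb k b c (Some u))) =
      (if opc u b c \<and> opc ?w1 a b \<and> opc ?w2 b d then Some (?w2 \<circ> tr k b d) else None)"
    using tbas_eq[OF k u ok(2)] tbas_eq[OF k w1W ok(1)] tbas_eq[OF k w2W ok(5)] by simp
  have feq: "?v2 \<circ> tr k b c = ?w2 \<circ> tr k b d" using E_tr2 by (simp add: fun_eq_iff)
  have ceq: "(opc u a c \<and> opc ?v1 c d \<and> opc ?v2 b c) \<longleftrightarrow> (opc u b c \<and> opc ?w1 a b \<and> opc ?w2 b d)"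
    using E2e[OF u] E2n[OF u] by (cases "d = a + NN k") auto
  show ?thesis using L R feq ceq by simp
qed

end

lemma rep_eqI: "x = y \<Longrightarrow> rep x = rep y" by simp

theorem mainTheorem1:
  fixes k :: nat and u :: "int \<Rightarrow> int"
  assumes "k \<ge> 1" and "u \<in> affW0 k"
  shows
  "(\<forall>a b c d. okp k a b \<and> okp k c d \<and>
       a mod (int k + 1) \<noteq> b mod (int k + 1) \<and> a mod (int k + 1) \<noteq> c mod (int k + 1) \<and>
       a mod (int k + 1) \<noteq> d mod (int k + 1) \<and> b mod (int k + 1) \<noteq> c mod (int k + 1) \<and>
       b mod (int k + 1) \<noteq> d mod (int k + 1) \<and> c mod (int k + 1) \<noteq> d mod (int k + 1)
     \<longrightarrow> topr k c d (topr k a b (basis u)) = topr k a b (topr k c d (basis u)))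
 \<and> (\<forall>a b c d. okp k a b \<and> okp k c d \<and>
       ((a < c \<and> c < b \<and> b < d) \<or> (b = c \<and> d - a > int k + 1))
     \<longrightarrow> topr k c d (topr k a b (basis u)) = zw_zero
       \<and> topr k a b (topr k c d (basis u)) = zw_zero)
 \<and> (\<forall>a b c d. okp k a b \<and> okp k c d \<and>
       ((a mod (int k + 1) = c mod (int k + 1) \<and> b \<le> d) \<or>
        (b mod (int k + 1) = d mod (int k + 1) \<and> c \<le> a))
     \<longrightarrow> topr k c d (topr k a b (basis u)) = zw_zero)
 \<and> (\<forall>a b d. a < b \<and> b < d \<and> d - a = int k + 1 \<and>
       okp k a b \<and> okp k b d \<and> okp k (b - int k - 1) a
     \<longrightarrow> topr k b d (topr k a b (basis u)) = topr k (b - int k - 1) a (topr k a b (basis u)))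
 \<and> (\<forall>a b c d. a < b \<and> b < c \<and> c < d \<and>
       b mod (int k + 1) = c mod (int k + 1) \<and> d mod (int k + 1) = a mod (int k + 1) \<and>
       (b - a) + (d - c) = int k + 1 \<and>
       okp k a b \<and> okp k c d \<and> okp k (d - int k - 1) c \<and> okp k (b - int k - 1) a
     \<longrightarrow> topr k c d (topr k a b (basis u)) =
         topr k (b - int k - 1) a (topr k (d - int k - 1) c (basis u)))
 \<and> (\<forall>a b c d. a < b \<and> b < c \<and> c < d \<and> c - a \<le> int k \<and> d - b \<le> int k \<and>
       okp k a b \<and> okp k b c \<and> okp k c d \<and> okp k a c \<and> okp k b d
     \<longrightarrow> topr k a c (topr k c d (topr k b c (basis u))) =
         topr k b c (topr k a b (topr k b d (basis u))))
 \<and> (\<forall>a b c d. a < b \<and> b < c \<and> c < d \<and> c - a \<le> int k \<and> d - b \<le> int k \<and>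
       okp k a b \<and> okp k b c \<and> okp k c d \<and> okp k a c \<and> okp k b d
     \<longrightarrow> topr k b c (topr k c d (topr k a c (basis u))) =
         topr k b d (topr k a b (topr k b c (basis u))))
 \<and> (\<forall>a b c. a < b \<and> b < c \<and> c - a < int k + 1 \<and>
       okp k a b \<and> okp k b c
     \<longrightarrow> topr k b c (topr k a b (topr k b c (basis u))) = zw_zero
       \<and> topr k a b (topr k b c (topr k a b (basis u))) = zw_zero)"
proof -
  note k = assms(1) and u0 = assms(2)
  have u: "u \<in> affW k" using u0 unfolding affW0_def by simp
  have NNe: "\<And>x. x - int k - 1 = x - NN k" by simp
  note R = basis_rep zero_rep topr_rep
  have goal: ?thesis (is "?P1 \<and> ?P2 \<and> ?P3 \<and> ?P4 \<and> ?P5 \<and> ?P6 \<and> ?P7 \<and> ?P8")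
  proof -
  have p1: ?P1
  proof (intro allI impI)
    fix a b c d
    assume h: "okp k a b \<and> okp k c d \<and>
       a mod (int k + 1) \<noteq> b mod (int k + 1) \<and> a mod (int k + 1) \<noteq> c mod (int k + 1) \<and>
       a mod (int k + 1) \<noteq> d mod (int k + 1) \<and> b mod (int k + 1) \<noteq> c mod (int k + 1) \<and>
       b mod (int k + 1) \<noteq> d mod (int k + 1) \<and> c mod (int k + 1) \<noteq> d mod (int k + 1)"
    show "topr k c d (topr k a b (basis u)) = topr k a b (topr k c d (basis u))"
      unfolding R by (rule rep_eqI) (rule partA[OF k u], use h in auto)
  qed
  have p2: ?P2
  proof (intro allI impI)
    fix a b c d
    assume h: "okp k a b \<and> okp k c d \<and> ((a < c \<and> c < b \<and> b < d) \<or> (b = c \<and> d - a > int k + 1))"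
    have "Tb k c d (Tb k a b (Some u)) = None \<and> Tb k a b (Tb k c d (Some u)) = None"
    proof (cases "a < c \<and> c < b \<and> b < d")
      case True then show ?thesis using partB1a[OF k u] h by blast
    next
      case False
      then have bc: "b = c" "d - a > NN k" using h by auto
      then show ?thesis using partB1b[OF k u0, of a b d] h by auto
    qed
    then show "topr k c d (topr k a b (basis u)) = zw_zero \<and> topr k a b (topr k c d (basis u)) = zw_zero"
      unfolding R by simp
  qed
  have p3: ?P3
  proof (intro allI impI)
    fix a b c d
    assume h: "okp k a b \<and> okp k c d \<and>
       ((a mod (int k + 1) = c mod (int k + 1) \<and> b \<le> d) \<or>
        (b mod (int k + 1) = d mod (int k + 1) \<and> c \<le> a))"
    have "Tb k c d (Tb k a b (Some u)) = None"
      using h partB2a[OF u, of a b c d] partB2b[OF u, of a b c d] by auto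
    then show "topr k c d (topr k a b (basis u)) = zw_zero" unfolding R by simp
  qed
  have p4: ?P4
  proof (intro allI impI)
    fix a b d
    assume h: "a < b \<and> b < d \<and> d - a = int k + 1 \<and> okp k a b \<and> okp k b d \<and> okp k (b - int k - 1) a"
    show "topr k b d (topr k a b (basis u)) = topr k (b - int k - 1) a (topr k a b (basis u))"
      unfolding R NNe by (rule rep_eqI) (rule partC1[OF u], use h in \<open>simp_all only: NNe\<close>)
  qed
  have p5: ?P5
  proof (intro allI impI)
    fix a b c d
    assume h: "a < b \<and> b < c \<and> c < d \<and>
       b mod (int k + 1) = c mod (int k + 1) \<and> d mod (int k + 1) = a mod (int k + 1) \<and>
       (b - a) + (d - c) = int k + 1 \<and>
       okp k a b \<and> okp k c d \<and> okp k (d - int k - 1) c \<and> okp k (b - int k - 1) a"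
    show "topr k c d (topr k a b (basis u)) = topr k (b - int k - 1) a (topr k (d - int k - 1) c (basis u))"
      unfolding R NNe by (rule rep_eqI) (rule partD[OF u], use h in \<open>simp_all only: NNe\<close>)
  qed
  have p6: ?P6
  proof (intro allI impI)
    fix a b c d
    assume h: "a < b \<and> b < c \<and> c < d \<and> c - a \<le> int k \<and> d - b \<le> int k \<and>
       okp k a b \<and> okp k b c \<and> okp k c d \<and> okp k a c \<and> okp k b d"
    interpret E: Eset k a b c d using h by unfold_locales auto
    show "topr k a c (topr k c d (topr k b c (basis u))) = topr k b c (topr k a b (topr k b d (basis u)))"
      unfolding R by (rule rep_eqI) (rule E.partE1[OF k u])
  qed
  have p7: ?P7
  proof (intro allI impI)
    fix a b c d
    assume h: "a < b \<and> b < c \<and> c < d \<and> c - a \<le> int k \<and> d - b \<le> int k \<and>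
       okp k a b \<and> okp k b c \<and> okp k c d \<and> okp k a c \<and> okp k b d"
    interpret E: Eset k a b c d using h by unfold_locales auto
    show "topr k b c (topr k c d (topr k a c (basis u))) = topr k b d (topr k a b (topr k b c (basis u)))"
      unfolding R by (rule rep_eqI) (rule E.partE2[OF k u])
  qed
  have p8: ?P8
  proof (intro allI impI)
    fix a b c
    assume h: "a < b \<and> b < c \<and> c - a < int k + 1 \<and> okp k a b \<and> okp k b c"
    have "Tb k b c (Tb k a b (Tb k b c (Some u))) = None" using partF1[OF u] h by auto
    moreover have "Tb k a b (Tb k b c (Tb k a b (Some u))) = None" using partF2[OF u] h by auto
    ultimately show "topr k b c (topr k a b (topr k b c (basis u))) = zw_zero \<and>
        topr k a b (topr k b c (topr k a b (basis u))) = zw_zero"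
      unfolding R by simp
  qed
  show ?thesis using p1 p2 p3 p4 p5 p6 p7 p8 by blast
  qed
  show ?thesis by (rule goal)
qed



end
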